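(* Let $\{X_t\}_{t\ge 0}$ be an irreducible, positive recurrent discrete-time Markov chain on a countable state space $\mathbb{E}$ with transition matrix $P$ and invariant distribution $\boldsymbol{\pi}$, and let $\boldsymbol{g}$ be a real vector on $\mathbb{E}$ with $\boldsymbol{\pi}|\boldsymbol{g}|<\infty$. Put $\omega=\boldsymbol{\pi}\boldsymbol{g}$. Fix an arbitrary state $j\in\mathbb{E}$, let $T(j)=\inf\{t\ge 1: X_t=j\}$, and define for $i\in\mathbb{E}$ $$h_i={\rm E}\Big[\sum_{0\le t<T(j)} g_{X_t}\,\Big|\,X_0=i\Big]-\omega\,{\rm E}[T(j)\mid X_0=i].$$ Let $A$ be an arbitrary non-empty subset of $\mathbb{E}$, let $T(A)=\inf\{t\ge 1: X_t\in A\}$, and for $i\in\mathbb{E}$ define $$y_i(A)={\rm E}\Big[\sum_{0\le t<T(A)} g_{X_t}\,\Big|\,X_0=i\Big],\qquad \tau_i(A)={\rm E}[T(A)\mid X_0=i].$$ Then for every $i\in\mathbb{E}$, $$h_i=y_i(A)-\omega\,\tau_i(A)+{\rm E}\big[h_{X_{T(A)}}\,\big|\,X_0=i\big].$$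
   Context: The vector $\boldsymbol{h}$ defined in the claim (together with $\omega=\boldsymbol{\pi}\boldsymbol{g}$) is a solution of Poisson's equation $(I-P)\boldsymbol{h}=\boldsymbol{g}-\omega\boldsymbol{1}$ with $h_j=0$, where $\boldsymbol{1}$ is the all-ones column vector; $|\boldsymbol{g}|$ denotes the componentwise absolute value. *)

theory Defs
  imports "HOL-Probability.Probability"
begin

text \<open>A discrete-time Markov chain on a countable state space 's with transition
matrix P, described through its family of laws started at each state:
M i is the underlying probability space conditioned on X_0 = i, and X t is the
state at time t. The law of the chain given X_0 = i is fixed by its
finite-dimensional distributions.\<close>

definition stochastic_matrix :: "('s \<Rightarrow> 's \<Rightarrow> real) \<Rightarrow> bool" where
  "stochastic_matrix P \<longleftrightarrow>
     (\<forall>i k. 0 \<le> P i k) \<and> (\<forall>i. P i summable_on UNIV \<and> (\<Sum>\<^sub>\<infinity>k. P i k) = 1)"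

definition markov_chain ::
  "('s::countable \<Rightarrow> 's \<Rightarrow> real) \<Rightarrow> ('s \<Rightarrow> 'w measure) \<Rightarrow> (nat \<Rightarrow> 'w \<Rightarrow> 's) \<Rightarrow> bool" where
  "markov_chain P M X \<longleftrightarrow> stochastic_matrix P \<and>
     (\<forall>i. prob_space (M i) \<and>
          (\<forall>t. X t \<in> measurable (M i) (count_space UNIV)) \<and>
          (\<forall>n (s :: nat \<Rightarrow> 's).
             measure (M i) {w \<in> space (M i). \<forall>k\<le>n. X k w = s k}
               = (if s 0 = i then (\<Prod>k<n. P (s k) (s (Suc k))) else 0)))"

text \<open>First hitting time T(A) = inf {t >= 1. X_t in A} (only relevant where it is
finite, which is almost surely the case for the chains considered).\<close>

definition hit_time :: "(nat \<Rightarrow> 'w \<Rightarrow> 's) \<Rightarrow> 's set \<Rightarrow> 'w \<Rightarrow> nat" where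
  "hit_time X A w = (LEAST t. 1 \<le> t \<and> X t w \<in> A)"

definition irreducible_mc :: "('s \<Rightarrow> 'w measure) \<Rightarrow> (nat \<Rightarrow> 'w \<Rightarrow> 's) \<Rightarrow> bool" where
  "irreducible_mc M X \<longleftrightarrow>
     (\<forall>i j. 0 < measure (M i) {w \<in> space (M i). \<exists>t. X t w = j})"

definition positive_recurrent_mc :: "('s \<Rightarrow> 'w measure) \<Rightarrow> (nat \<Rightarrow> 'w \<Rightarrow> 's) \<Rightarrow> bool" where
  "positive_recurrent_mc M X \<longleftrightarrow>
     (\<forall>i. (AE w in M i. \<exists>t\<ge>1. X t w = i) \<and>
          integrable (M i) (\<lambda>w. real (hit_time X {i} w)))"

definition invariant_distribution :: "('s \<Rightarrow> 's \<Rightarrow> real) \<Rightarrow> ('s \<Rightarrow> real) \<Rightarrow> bool" where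
  "invariant_distribution P \<pi> \<longleftrightarrow>
     (\<forall>k. 0 \<le> \<pi> k) \<and> \<pi> summable_on UNIV \<and> (\<Sum>\<^sub>\<infinity>k. \<pi> k) = 1 \<and>
     (\<forall>k. (\<lambda>l. \<pi> l * P l k) summable_on UNIV \<and> (\<Sum>\<^sub>\<infinity>l. \<pi> l * P l k) = \<pi> k)"

definition y_val :: "('s \<Rightarrow> 'w measure) \<Rightarrow> (nat \<Rightarrow> 'w \<Rightarrow> 's) \<Rightarrow> ('s \<Rightarrow> real) \<Rightarrow> 's set \<Rightarrow> 's \<Rightarrow> real" where
  "y_val M X g A i = (\<integral>w. (\<Sum>t<hit_time X A w. g (X t w)) \<partial>M i)"

definition tau_val :: "('s \<Rightarrow> 'w measure) \<Rightarrow> (nat \<Rightarrow> 'w \<Rightarrow> 's) \<Rightarrow> 's set \<Rightarrow> 's \<Rightarrow> real" where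
  "tau_val M X A i = (\<integral>w. real (hit_time X A w) \<partial>M i)"

end

theory Submission
  imports Defs
begin

locale MC =
  fixes P :: "'s::countable \<Rightarrow> 's \<Rightarrow> real" and M :: "'s \<Rightarrow> 'w measure" and X :: "nat \<Rightarrow> 'w \<Rightarrow> 's"
  assumes mc: "markov_chain P M X"
begin

lemma prob[simp]: "prob_space (M i)"
  using mc unfolding markov_chain_def by blast

lemma X_meas[measurable]: "X t \<in> measurable (M i) (count_space UNIV)"
  using mc unfolding markov_chain_def by blast

lemma fdd: "measure (M i) {w \<in> space (M i). \<forall>k\<le>n. X k w = s k}
               = (if s 0 = i then (\<Prod>k<n. P (s k) (s (Suc k))) else 0)"
  using mc unfolding markov_chain_def by blast

lemma P_nonneg[simp]: "0 \<le> P i k"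
  using mc unfolding markov_chain_def stochastic_matrix_def by blast

definition pref :: "nat \<Rightarrow> 'w \<Rightarrow> 's list" where
  "pref n w = map (\<lambda>t. X t w) [0..<Suc n]"

lemma pref_nth[simp]: "t \<le> n \<Longrightarrow> pref n w ! t = X t w"
  unfolding pref_def by (simp add: nth_map_upt less_Suc_eq_le del: upt_Suc)

lemma length_pref[simp]: "length (pref n w) = Suc n"
  unfolding pref_def by (simp del: upt_Suc)

lemma pref_eq_iff: "pref n w = xs \<longleftrightarrow> length xs = Suc n \<and> (\<forall>k\<le>n. X k w = xs ! k)"
  by (auto simp: list_eq_iff_nth_eq less_Suc_eq_le)

lemma pref_Suc: "pref (Suc n) w = X 0 w # map (\<lambda>t. X (Suc t) w) [0..<Suc n]"
  unfolding pref_def by (simp add: map_upt_Suc del: upt_Suc)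

lemma sets_pref_eq[measurable]: "{w \<in> space (M i). pref n w = xs} \<in> sets (M i)"
proof -
  have "{w \<in> space (M i). pref n w = xs} = (if length xs = Suc n then (\<Inter>k\<in>{..n}. {w \<in> space (M i). X k w = xs ! k}) \<inter> space (M i) else {})"
    by (auto simp: pref_eq_iff)
  also have "\<dots> \<in> sets (M i)"
    by (auto intro!: sets.finite_INT)
  finally show ?thesis .
qed

lemma pref_meas[measurable]: "pref n \<in> measurable (M i) (count_space UNIV)"
proof (subst measurable_count_space_eq_countable)
  show "countable (UNIV :: 's list set)" by simp
  show "pref n \<in> space (M i) \<rightarrow> UNIV \<and> (\<forall>a\<in>UNIV. pref n -` {a} \<inter> space (M i) \<in> sets (M i))"
    using sets_pref_eq[of i n] by (auto simp: vimage_def Int_def conj_commute)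
qed

definition pw :: "'s \<Rightarrow> nat \<Rightarrow> 's list \<Rightarrow> ennreal" where
  "pw i n xs = ennreal (if length xs = Suc n \<and> xs ! 0 = i then (\<Prod>k<n. P (xs ! k) (xs ! Suc k)) else 0)"

lemma emeasure_pref: "emeasure (M i) {w \<in> space (M i). pref n w = xs} = pw i n xs"
proof (cases "length xs = Suc n")
  case True
  interpret prob_space "M i" by simp
  have "emeasure (M i) {w \<in> space (M i). pref n w = xs} = emeasure (M i) {w \<in> space (M i). \<forall>k\<le>n. X k w = xs ! k}"
    using True by (simp add: pref_eq_iff)
  also have "\<dots> = ennreal (measure (M i) {w \<in> space (M i). \<forall>k\<le>n. X k w = xs ! k})"
    by (simp add: emeasure_eq_measure)
  also have "\<dots> = pw i n xs"
    unfolding fdd pw_def using True by simp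
  finally show ?thesis .
next
  case False
  then show ?thesis by (simp add: pref_eq_iff pw_def)
qed

lemma nn_integral_pref:
  "(\<integral>\<^sup>+w. F (pref n w) \<partial>M i) = (\<integral>\<^sup>+xs. F xs * pw i n xs \<partial>count_space UNIV)"
proof -
  have "(\<integral>\<^sup>+w. F (pref n w) \<partial>M i) =
     (\<integral>\<^sup>+w. (\<integral>\<^sup>+xs. F xs * indicator {w \<in> space (M i). pref n w = xs} w \<partial>count_space UNIV) \<partial>M i)"
  proof (rule nn_integral_cong)
    fix w assume w: "w \<in> space (M i)"
    have "(\<integral>\<^sup>+xs. F xs * indicator {w \<in> space (M i). pref n w = xs} w \<partial>count_space UNIV)
        = (\<integral>\<^sup>+xs. F xs * indicator {pref n w} xs \<partial>count_space UNIV)"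
      using w by (intro nn_integral_cong) (auto split: split_indicator)
    also have "\<dots> = F (pref n w)" by simp
    finally show "F (pref n w) = (\<integral>\<^sup>+xs. F xs * indicator {w \<in> space (M i). pref n w = xs} w \<partial>count_space UNIV)" by simp
  qed
  also have "\<dots> = (\<integral>\<^sup>+xs. (\<integral>\<^sup>+w. F xs * indicator {w \<in> space (M i). pref n w = xs} w \<partial>M i) \<partial>count_space UNIV)"
    by (rule nn_integral_count_space_nn_integral[where I=UNIV and M="M i" and f="\<lambda>xs w. F xs * indicator {w \<in> space (M i). pref n w = xs} w"]) auto
  also have "\<dots> = (\<integral>\<^sup>+xs. F xs * pw i n xs \<partial>count_space UNIV)"
    by (simp add: nn_integral_cmult_indicator emeasure_pref)
  finally show ?thesis .
qed

lemma pw_Cons: "pw i (Suc n) (j # xs) = (if j = i then ennreal (P i (xs ! 0)) * pw (xs ! 0) n xs else 0)"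
proof (cases "length xs = Suc n \<and> j = i")
  case True
  then show ?thesis
    unfolding pw_def
    by (simp add: prod.lessThan_Suc_shift ennreal_mult prod_nonneg del: prod.lessThan_Suc)
qed (auto simp: pw_def)

lemma pw_zero: "xs ! 0 \<noteq> l \<Longrightarrow> pw l n xs = 0"
  by (simp add: pw_def)

lemma FS:
  "(\<integral>\<^sup>+w. F (pref (Suc n) w) \<partial>M i) =
   (\<integral>\<^sup>+l. ennreal (P i l) * (\<integral>\<^sup>+w. F (i # pref n w) \<partial>M l) \<partial>count_space UNIV)"
proof -
  have "(\<integral>\<^sup>+l. ennreal (P i l) * (\<integral>\<^sup>+w. F (i # pref n w) \<partial>M l) \<partial>count_space UNIV)
     = (\<integral>\<^sup>+l. (\<integral>\<^sup>+xs. ennreal (P i l) * (F (i # xs) * pw l n xs) \<partial>count_space UNIV) \<partial>count_space UNIV)"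
    by (simp add: nn_integral_pref[where F="\<lambda>xs. F (i # xs)"] nn_integral_cmult)
  also have "\<dots> = (\<integral>\<^sup>+xs. (\<integral>\<^sup>+l. ennreal (P i l) * (F (i # xs) * pw l n xs) \<partial>count_space UNIV) \<partial>count_space UNIV)"
    by (rule nn_integral_count_space_nn_integral[symmetric]) auto
  also have "\<dots> = (\<integral>\<^sup>+xs. (\<integral>\<^sup>+l. (ennreal (P i l) * (F (i # xs) * pw l n xs)) * indicator {xs ! 0} l \<partial>count_space UNIV) \<partial>count_space UNIV)"
    by (intro nn_integral_cong) (auto split: split_indicator simp: pw_zero)
  also have "\<dots> = (\<integral>\<^sup>+xs. (ennreal (P i (xs ! 0)) * (F (i # xs) * pw (xs ! 0) n xs)) \<partial>count_space UNIV)"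
    by (intro nn_integral_cong) (subst nn_integral_indicator_singleton, auto)
  also have "\<dots> = (\<integral>\<^sup>+xs. F (i # xs) * pw i (Suc n) (i # xs) \<partial>count_space UNIV)"
    by (intro nn_integral_cong) (simp add: pw_Cons mult_ac)
  also have "\<dots> = (\<integral>\<^sup>+ys. F ys * pw i (Suc n) ys \<partial>count_space (range (Cons i)))"
    by (rule nn_integral_bij_count_space[of "Cons i" UNIV "range (Cons i)" "\<lambda>ys. F ys * pw i (Suc n) ys"])
       (simp add: bij_betw_def)
  also have "\<dots> = (\<integral>\<^sup>+ys. F ys * pw i (Suc n) ys \<partial>count_space UNIV)"
  proof (rule nn_integral_count_space_eq)
    fix ys assume "ys \<in> UNIV - range (Cons i)"
    then show "F ys * pw i (Suc n) ys = 0"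
      by (cases ys) (auto simp: pw_def)
  qed auto
  also have "\<dots> = (\<integral>\<^sup>+w. F (pref (Suc n) w) \<partial>M i)"
    by (rule nn_integral_pref[symmetric])
  finally show ?thesis ..
qed

end

lemma nn_sum_real:
  fixes f :: "'a::countable \<Rightarrow> real"
  assumes "\<And>k. 0 \<le> f k" "f summable_on UNIV"
  shows "(\<integral>\<^sup>+k. ennreal (f k) \<partial>count_space UNIV) = ennreal (\<Sum>\<^sub>\<infinity>k. f k)"
proof -
  have "(\<lambda>x. norm (f x)) summable_on UNIV" using assms by simp
  then have a: "Infinite_Set_Sum.abs_summable_on f UNIV"
    using abs_summable_equivalent by blast
  have "(\<integral>\<^sup>+k. ennreal (f k) \<partial>count_space UNIV) = ennreal (infsetsum f UNIV)"
    using nn_integral_conv_infsetsum[OF a] assms by simp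
  also have "infsetsum f UNIV = (\<Sum>\<^sub>\<infinity>k. f k)"
    using infsetsum_infsum[OF a] .
  finally show ?thesis .
qed

context MC begin

lemma AE_X0: "AE w in M l. X 0 w = l"
proof -
  interpret prob_space "M l" by simp
  have "measure (M l) {w \<in> space (M l). \<forall>k\<le>0. X k w = (\<lambda>_. l) k} = 1"
    by (subst fdd) simp
  then have "prob {w \<in> space (M l). X 0 w = l} = 1" by simp
  then show ?thesis by (auto dest!: AE_prob_1)
qed

lemma sumP: "(\<integral>\<^sup>+l. ennreal (P i l) \<partial>count_space UNIV) = 1"
proof -
  have "P i summable_on UNIV" "(\<Sum>\<^sub>\<infinity>k. P i k) = 1"
    using mc unfolding markov_chain_def stochastic_matrix_def by auto
  then show ?thesis by (subst nn_sum_real) auto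
qed

definition Tr :: "'s set \<Rightarrow> ('s \<Rightarrow> ennreal) \<Rightarrow> 's \<Rightarrow> ennreal" where
  "Tr S u i = (\<integral>\<^sup>+l. ennreal (P i l) * (indicator S l * u l) \<partial>count_space UNIV)"

definition sumB :: "('s \<Rightarrow> ennreal) \<Rightarrow> 's set \<Rightarrow> nat \<Rightarrow> 's list \<Rightarrow> ennreal" where
  "sumB v B n xs = (\<Sum>t<n. v (xs ! t) * (if \<forall>u\<in>{1..t}. xs ! u \<notin> B then 1 else 0))"

definition exitB :: "('s \<Rightarrow> ennreal) \<Rightarrow> 's set \<Rightarrow> nat \<Rightarrow> 's list \<Rightarrow> ennreal" where
  "exitB v B n xs = (\<Sum>t<n. (if xs ! Suc t \<in> B \<and> (\<forall>u\<in>{1..t}. xs ! u \<notin> B) then v (xs ! Suc t) else 0))"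

lemma all_Cons_shift: "(\<forall>u\<in>{1..Suc t}. Q ((x # ys) ! u)) \<longleftrightarrow> Q (ys ! 0) \<and> (\<forall>u\<in>{1..t}. Q (ys ! u))"
proof
  assume a: "\<forall>u\<in>{1..Suc t}. Q ((x # ys) ! u)"
  have "\<forall>v\<le>t. Q (ys ! v)"
  proof (intro allI impI)
    fix v assume "v \<le> t" then have "Suc v \<in> {1..Suc t}" by simp
    with a show "Q (ys ! v)" by force
  qed
  then show "Q (ys ! 0) \<and> (\<forall>u\<in>{1..t}. Q (ys ! u))" by auto
next
  assume a: "Q (ys ! 0) \<and> (\<forall>u\<in>{1..t}. Q (ys ! u))"
  show "\<forall>u\<in>{1..Suc t}. Q ((x # ys) ! u)"
  proof
    fix u assume u: "u \<in> {1..Suc t}"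
    then obtain v where v: "u = Suc v" "v \<le> t" by (cases u) auto
    show "Q ((x # ys) ! u)" using a v by (cases v) auto
  qed
qed

lemma sumB_Cons: "sumB v B (Suc n) (x # ys) = v x + (if ys ! 0 \<in> B then 0 else sumB v B n ys)"
proof -
  have "sumB v B (Suc n) (x # ys) = v x + (\<Sum>t<n. v (ys ! t) * (if ys ! 0 \<notin> B \<and> (\<forall>u\<in>{1..t}. ys ! u \<notin> B) then 1 else 0))"
    unfolding sumB_def sum.lessThan_Suc_shift
    by (simp only: all_Cons_shift[where Q="\<lambda>z. z \<notin> B"] nth_Cons_Suc nth_Cons_0) simp
  then show ?thesis by (simp add: sumB_def)
qed

lemma exitB_Cons: "exitB v B (Suc n) (x # ys) = (if ys ! 0 \<in> B then v (ys ! 0) else exitB v B n ys)"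
proof -
  have "exitB v B (Suc n) (x # ys) = (if ys ! 0 \<in> B then v (ys ! 0) else 0) + (\<Sum>t<n. (if ys ! Suc t \<in> B \<and> (ys ! 0 \<notin> B \<and> (\<forall>u\<in>{1..t}. ys ! u \<notin> B)) then v (ys ! Suc t) else 0))"
    unfolding exitB_def sum.lessThan_Suc_shift
    by (simp only: all_Cons_shift[where Q="\<lambda>z. z \<notin> B"] nth_Cons_Suc nth_Cons_0) simp
  then show ?thesis by (simp add: exitB_def)
qed

definition Phin :: "'s set \<Rightarrow> ('s \<Rightarrow> ennreal) \<Rightarrow> nat \<Rightarrow> 's \<Rightarrow> ennreal" where
  "Phin B v n i = (\<integral>\<^sup>+w. sumB v B n (pref n w) \<partial>M i)"

definition Phi :: "'s set \<Rightarrow> ('s \<Rightarrow> ennreal) \<Rightarrow> 's \<Rightarrow> ennreal" where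
  "Phi B v i = (SUP n. Phin B v n i)"

lemma Phin_0[simp]: "Phin B v 0 i = 0"
  by (simp add: Phin_def sumB_def)

lemma emeasure_space_M[simp]: "emeasure (M l) (space (M l)) = 1"
  using prob_space.emeasure_space_1[OF prob] .

lemma int_const: "(\<integral>\<^sup>+w. c \<partial>M l) = c"
  by simp

lemma Tr_const_add: "(\<integral>\<^sup>+l. ennreal (P i l) * (c + u l) \<partial>count_space UNIV) = c + (\<integral>\<^sup>+l. ennreal (P i l) * u l \<partial>count_space UNIV)"
proof -
  have "(\<integral>\<^sup>+l. ennreal (P i l) * (c + u l) \<partial>count_space UNIV) = (\<integral>\<^sup>+l. c * ennreal (P i l) + ennreal (P i l) * u l \<partial>count_space UNIV)"
    by (simp add: distrib_left mult.commute)
  also have "\<dots> = c * (\<integral>\<^sup>+l. ennreal (P i l) \<partial>count_space UNIV) + (\<integral>\<^sup>+l. ennreal (P i l) * u l \<partial>count_space UNIV)"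
    by (simp add: nn_integral_add nn_integral_cmult)
  finally show ?thesis by (simp add: sumP)
qed

lemma Phin_Suc: "Phin B v (Suc n) i = v i + Tr (-B) (Phin B v n) i"
proof -
  have "Phin B v (Suc n) i = (\<integral>\<^sup>+l. ennreal (P i l) * (\<integral>\<^sup>+w. sumB v B (Suc n) (i # pref n w) \<partial>M l) \<partial>count_space UNIV)"
    unfolding Phin_def by (rule FS)
  also have "\<dots> = (\<integral>\<^sup>+l. ennreal (P i l) * (v i + indicator (-B) l * Phin B v n l) \<partial>count_space UNIV)"
  proof (intro nn_integral_cong arg_cong2[where f="(*)"] refl)
    fix l
    have "(\<integral>\<^sup>+w. sumB v B (Suc n) (i # pref n w) \<partial>M l) = (\<integral>\<^sup>+w. v i + indicator (-B) l * sumB v B n (pref n w) \<partial>M l)"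
      apply (intro nn_integral_cong_AE)
      using AE_X0[of l] apply eventually_elim
      by (auto simp: sumB_Cons split: split_indicator)
    also have "\<dots> = v i + indicator (-B) l * Phin B v n l"
      by (simp add: nn_integral_add nn_integral_cmult int_const Phin_def)
    finally show "(\<integral>\<^sup>+w. sumB v B (Suc n) (i # pref n w) \<partial>M l) = v i + indicator (-B) l * Phin B v n l" .
  qed
  also have "\<dots> = v i + Tr (-B) (Phin B v n) i"
    by (simp add: Tr_const_add Tr_def)
  finally show ?thesis .
qed

definition Psin :: "'s set \<Rightarrow> ('s \<Rightarrow> ennreal) \<Rightarrow> nat \<Rightarrow> 's \<Rightarrow> ennreal" where
  "Psin B v n i = (\<integral>\<^sup>+w. exitB v B n (pref n w) \<partial>M i)"

lemma Psin_Suc: "Psin B v (Suc n) i = Tr B v i + Tr (-B) (Psin B v n) i"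
proof -
  have "Psin B v (Suc n) i = (\<integral>\<^sup>+l. ennreal (P i l) * (\<integral>\<^sup>+w. exitB v B (Suc n) (i # pref n w) \<partial>M l) \<partial>count_space UNIV)"
    unfolding Psin_def by (rule FS)
  also have "\<dots> = (\<integral>\<^sup>+l. ennreal (P i l) * (indicator B l * v l) + ennreal (P i l) * (indicator (-B) l * Psin B v n l) \<partial>count_space UNIV)"
  proof (intro nn_integral_cong)
    fix l
    have "(\<integral>\<^sup>+w. exitB v B (Suc n) (i # pref n w) \<partial>M l) = (\<integral>\<^sup>+w. indicator B l * v l + indicator (-B) l * exitB v B n (pref n w) \<partial>M l)"
      apply (intro nn_integral_cong_AE)
      using AE_X0[of l] apply eventually_elim
      by (auto simp: exitB_Cons split: split_indicator)
    also have "\<dots> = indicator B l * v l + indicator (-B) l * Psin B v n l"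
      by (simp add: nn_integral_add nn_integral_cmult int_const Psin_def)
    finally show "ennreal (P i l) * (\<integral>\<^sup>+w. exitB v B (Suc n) (i # pref n w) \<partial>M l) = ennreal (P i l) * (indicator B l * v l) + ennreal (P i l) * (indicator (-B) l * Psin B v n l)"
      by (simp add: distrib_left)
  qed
  also have "\<dots> = Tr B v i + Tr (-B) (Psin B v n) i"
    by (simp add: nn_integral_add Tr_def)
  finally show ?thesis .
qed

lemma Psin_eq_Phin: "Psin B v n i = Phin B (Tr B v) n i"
proof (induction n arbitrary: i)
  case 0 then show ?case by (simp add: Psin_def exitB_def)
next
  case (Suc n)
  have "Psin B v n = Phin B (Tr B v) n" using Suc by auto
  then show ?case by (simp add: Psin_Suc Phin_Suc)
qed

definition pn :: "nat \<Rightarrow> ('s \<Rightarrow> ennreal) \<Rightarrow> 's \<Rightarrow> ennreal" where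
  "pn n v i = (\<integral>\<^sup>+w. v (X n w) \<partial>M i)"

lemma pn_0: "pn 0 v i = v i"
  unfolding pn_def using AE_X0[of i]
  by (subst nn_integral_cong_AE[where v="\<lambda>_. v i"]) (auto simp: int_const)

lemma pn_Suc: "pn (Suc n) v i = Tr UNIV (pn n v) i"
proof -
  have "pn (Suc n) v i = (\<integral>\<^sup>+w. (\<lambda>xs. v (xs ! Suc n)) (pref (Suc n) w) \<partial>M i)"
    unfolding pn_def by simp
  also have "\<dots> = (\<integral>\<^sup>+l. ennreal (P i l) * (\<integral>\<^sup>+w. v ((i # pref n w) ! Suc n) \<partial>M l) \<partial>count_space UNIV)"
    by (rule FS)
  also have "\<dots> = Tr UNIV (pn n v) i"
    by (simp add: Tr_def pn_def)
  finally show ?thesis .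
qed

end

context MC begin

lemma le_sum_r: "y \<le> (a::ennreal) + y"
  by (rule add_increasing) auto

lemma Tr_add: "Tr S (\<lambda>l. u l + w l) i = Tr S u i + Tr S w i"
  unfolding Tr_def by (simp add: distrib_left nn_integral_add)

lemma Tr_cmult: "Tr S (\<lambda>l. c * u l) i = c * Tr S u i"
  unfolding Tr_def by (subst nn_integral_cmult[symmetric]) (auto intro!: nn_integral_cong simp: mult_ac)

lemma Tr_mono: "(\<And>l. u l \<le> w l) \<Longrightarrow> Tr S u i \<le> Tr S w i"
  unfolding Tr_def by (intro nn_integral_mono mult_left_mono) (auto simp: indicator_def)

lemma Tr_mono_set: "S \<subseteq> S' \<Longrightarrow> Tr S u i \<le> Tr S' u i"
  unfolding Tr_def by (intro nn_integral_mono mult_left_mono) (auto simp: indicator_def)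

lemma Tr_zero[simp]: "Tr S (\<lambda>_. 0) i = 0"
  unfolding Tr_def by simp

lemma Tr_split: "Tr UNIV u i = Tr S u i + Tr (-S) u i"
  unfolding Tr_def by (subst nn_integral_add[symmetric]) (auto intro!: nn_integral_cong simp: indicator_def)

lemma Tr_UNIV_1: "Tr UNIV (\<lambda>_. 1) i = 1"
  unfolding Tr_def by (simp add: sumP)

lemma Tr_single: "Tr {j} u i = ennreal (P i j) * u j"
proof -
  have "Tr {j} u i = (\<integral>\<^sup>+l. (ennreal (P i l) * u l) * indicator {j} l \<partial>count_space UNIV)"
    unfolding Tr_def by (intro nn_integral_cong) (simp add: indicator_def)
  also have "\<dots> = ennreal (P i j) * u j" by simp
  finally show ?thesis .
qed

lemma Tr_SUP:
  assumes "\<And>n l. U n l \<le> U (Suc n) l"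
  shows "Tr S (\<lambda>l. SUP n. U n l) i = (SUP n. Tr S (U n) i)"
proof -
  have inc: "incseq (\<lambda>n l. ennreal (P i l) * (indicator S l * U n l))"
    using assms by (intro incseq_SucI le_funI mult_left_mono) (auto simp: indicator_def)
  have "Tr S (\<lambda>l. SUP n. U n l) i = (\<integral>\<^sup>+l. (SUP n. ennreal (P i l) * (indicator S l * U n l)) \<partial>count_space UNIV)"
    unfolding Tr_def by (simp add: SUP_mult_left_ennreal)
  also have "\<dots> = (SUP n. Tr S (U n) i)"
    unfolding Tr_def by (rule nn_integral_monotone_convergence_SUP[OF inc]) simp
  finally show ?thesis .
qed

lemma Tr_swap: "Tr S (\<lambda>l. \<integral>\<^sup>+k. G l k \<partial>count_space UNIV) i = (\<integral>\<^sup>+k. Tr S (\<lambda>l. G l k) i \<partial>count_space UNIV)"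
  unfolding Tr_def
  by (simp add: nn_integral_cmult[symmetric] mult.assoc[symmetric])
     (rule nn_integral_count_space_nn_integral[symmetric], auto)

lemma sumB_mono_n: "sumB v B n xs \<le> sumB v B (Suc n) xs"
  unfolding sumB_def by simp

lemma sumB_pref: "n \<le> m \<Longrightarrow> sumB v B n (pref n w) = sumB v B n (pref m w)"
  unfolding sumB_def by (intro sum.cong refl arg_cong2[where f="(*)"]) auto

lemma Phin_mono_n: "Phin B v n i \<le> Phin B v (Suc n) i"
  unfolding Phin_def
  by (intro nn_integral_mono) (subst sumB_pref[of n "Suc n"], simp, rule sumB_mono_n)

lemma Phin_incseq: "incseq (\<lambda>n. Phin B v n i)"
  by (rule incseq_SucI) (rule Phin_mono_n)

lemma SUP_Suc_inc: "incseq (f :: nat \<Rightarrow> ennreal) \<Longrightarrow> (SUP n. f (Suc n)) = (SUP n. f n)"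
  by (rule antisym) (auto intro!: SUP_least SUP_upper2[where i="Suc _"] incseq_SucD SUP_mono simp: incseq_Suc_iff)

lemma Phi_fix: "Phi B v i = v i + Tr (-B) (Phi B v) i"
proof -
  have "Phi B v i = (SUP n. Phin B v (Suc n) i)"
    unfolding Phi_def by (rule SUP_Suc_inc[symmetric]) (rule Phin_incseq)
  also have "\<dots> = (SUP n. v i + Tr (-B) (Phin B v n) i)"
    by (simp add: Phin_Suc)
  also have "\<dots> = v i + (SUP n. Tr (-B) (Phin B v n) i)"
    by (simp add: ennreal_SUP_add_right)
  also have "\<dots> = v i + Tr (-B) (Phi B v) i"
    unfolding Phi_def by (subst Tr_SUP) (auto intro: Phin_mono_n)
  finally show ?thesis .
qed

lemma Phi_ge: "v i \<le> Phi B v i"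
  by (subst Phi_fix) simp

lemma Phi_min:
  assumes "\<And>i. v i + Tr (-B) G i \<le> G i"
  shows "Phi B v i \<le> G i"
proof -
  have "Phin B v n i \<le> G i" for n
  proof (induction n arbitrary: i)
    case (Suc n)
    have "Phin B v (Suc n) i = v i + Tr (-B) (Phin B v n) i" by (rule Phin_Suc)
    also have "\<dots> \<le> v i + Tr (-B) G i" using Suc by (intro add_left_mono Tr_mono) auto
    also have "\<dots> \<le> G i" by (rule assms)
    finally show ?case .
  qed simp
  then show ?thesis unfolding Phi_def by (auto intro: SUP_least)
qed

lemma sumB_add: "sumB (\<lambda>k. v k + w k) B n xs = sumB v B n xs + sumB w B n xs"
  unfolding sumB_def by (simp add: sum.distrib distrib_right)

lemma sumB_cmult: "sumB (\<lambda>k. c * v k) B n xs = c * sumB v B n xs"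
  unfolding sumB_def by (simp add: sum_distrib_left mult_ac)

lemma sumB_mono: "(\<And>k. v k \<le> w k) \<Longrightarrow> sumB v B n xs \<le> sumB w B n xs"
  unfolding sumB_def by (intro sum_mono mult_right_mono) auto

lemma Phin_add: "Phin B (\<lambda>k. v k + w k) n i = Phin B v n i + Phin B w n i"
  unfolding Phin_def sumB_add by (simp add: nn_integral_add)

lemma Phin_cmult: "Phin B (\<lambda>k. c * v k) n i = c * Phin B v n i"
  unfolding Phin_def sumB_cmult by (simp add: nn_integral_cmult)

lemma Phi_add: "Phi B (\<lambda>k. v k + w k) i = Phi B v i + Phi B w i"
  unfolding Phi_def Phin_add by (rule ennreal_SUP_add) (auto intro: Phin_incseq)

lemma Phi_cmult: "Phi B (\<lambda>k. c * v k) i = c * Phi B v i"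
  unfolding Phi_def Phin_cmult by (simp add: SUP_mult_left_ennreal)

lemma Phi_mono: "(\<And>k. v k \<le> w k) \<Longrightarrow> Phi B v i \<le> Phi B w i"
  unfolding Phi_def Phin_def by (intro SUP_mono) (auto intro!: nn_integral_mono sumB_mono)

lemma Phi_const: "Phi B (\<lambda>_. c) i = c * Phi B (\<lambda>_. 1) i"
  using Phi_cmult[where B=B and v="\<lambda>_. 1" and c=c and i=i] by simp

lemma Phin_commute: "Phin B (Tr (-B) v) n i = Tr (-B) (Phin B v n) i"
proof (induction n arbitrary: i)
  case 0
  have "Phin B v 0 = (\<lambda>_. 0)" by (rule ext) simp
  then show ?case by simp
next
  case (Suc n)
  have e: "Phin B (Tr (-B) v) n = (\<lambda>i. Tr (-B) (Phin B v n) i)" using Suc by auto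
  show ?case by (simp add: Phin_Suc e Tr_add[symmetric])
qed

lemma Phi_commute: "Phi B (Tr (-B) v) i = Tr (-B) (Phi B v) i"
  unfolding Phi_def Phin_commute by (subst Tr_SUP) (auto intro: Phin_mono_n)

lemma Phi_antimono_set:
  assumes "B' \<subseteq> B" shows "Phi B v i \<le> Phi B' v i"
proof (rule Phi_min)
  fix i
  have "Tr (-B) (Phi B' v) i \<le> Tr (-B') (Phi B' v) i" using assms by (intro Tr_mono_set) auto
  then have "v i + Tr (-B) (Phi B' v) i \<le> v i + Tr (-B') (Phi B' v) i" by (rule add_left_mono)
  also have "\<dots> = Phi B' v i" by (rule Phi_fix[symmetric])
  finally show "v i + Tr (-B) (Phi B' v) i \<le> Phi B' v i" .
qed

lemma sumB_sum: "sumB v B n xs = (\<integral>\<^sup>+k. v k * sumB (indicator {k}) B n xs \<partial>count_space UNIV)"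
proof -
  have "(\<integral>\<^sup>+k. v k * sumB (indicator {k}) B n xs \<partial>count_space UNIV)
      = (\<integral>\<^sup>+k. (\<Sum>t<n. (v k * (if \<forall>u\<in>{1..t}. xs ! u \<notin> B then 1 else 0)) * indicator {xs ! t} k) \<partial>count_space UNIV)"
    unfolding sumB_def by (intro nn_integral_cong) (auto simp: sum_distrib_left indicator_def intro!: sum.cong)
  also have "\<dots> = sumB v B n xs"
    unfolding sumB_def by (subst nn_integral_sum) auto
  finally show ?thesis ..
qed

lemma Phin_sum: "Phin B v n i = (\<integral>\<^sup>+k. v k * Phin B (indicator {k}) n i \<partial>count_space UNIV)"
proof -
  have "Phin B v n i = (\<integral>\<^sup>+w. (\<integral>\<^sup>+k. v k * sumB (indicator {k}) B n (pref n w) \<partial>count_space UNIV) \<partial>M i)"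
    unfolding Phin_def by (subst sumB_sum) rule
  also have "\<dots> = (\<integral>\<^sup>+k. (\<integral>\<^sup>+w. v k * sumB (indicator {k}) B n (pref n w) \<partial>M i) \<partial>count_space UNIV)"
    by (rule nn_integral_count_space_nn_integral) auto
  also have "\<dots> = (\<integral>\<^sup>+k. v k * Phin B (indicator {k}) n i \<partial>count_space UNIV)"
    unfolding Phin_def by (simp add: nn_integral_cmult)
  finally show ?thesis .
qed

lemma Phi_sum: "Phi B v i = (\<integral>\<^sup>+k. v k * Phi B (indicator {k}) i \<partial>count_space UNIV)"
proof -
  have inc: "incseq (\<lambda>n k. v k * Phin B (indicator {k}) n i)"
    by (intro incseq_SucI le_funI mult_left_mono Phin_mono_n) auto
  have "Phi B v i = (SUP n. (\<integral>\<^sup>+k. v k * Phin B (indicator {k}) n i \<partial>count_space UNIV))"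
    unfolding Phi_def by (subst Phin_sum) rule
  also have "\<dots> = (\<integral>\<^sup>+k. (SUP n. v k * Phin B (indicator {k}) n i) \<partial>count_space UNIV)"
    by (rule nn_integral_monotone_convergence_SUP[OF inc, symmetric]) simp
  also have "\<dots> = (\<integral>\<^sup>+k. v k * Phi B (indicator {k}) i \<partial>count_space UNIV)"
    unfolding Phi_def by (simp add: SUP_mult_left_ennreal)
  finally show ?thesis .
qed

end

context MC begin

lemma hit_time_meas[measurable]: "hit_time X B \<in> measurable (M i) (count_space UNIV)"
  unfolding hit_time_def by measurable

lemma hit_props:
  assumes "\<exists>t\<ge>1. X t w \<in> B"
  shows "1 \<le> hit_time X B w" "X (hit_time X B w) w \<in> B"
    "\<And>u. 1 \<le> u \<Longrightarrow> u < hit_time X B w \<Longrightarrow> X u w \<notin> B"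
    "\<And>t. 1 \<le> t \<Longrightarrow> X t w \<in> B \<Longrightarrow> hit_time X B w \<le> t"
proof -
  from assms obtain t where t: "1 \<le> t \<and> X t w \<in> B" by auto
  show "1 \<le> hit_time X B w" "X (hit_time X B w) w \<in> B"
    unfolding hit_time_def using LeastI[of "\<lambda>t. 1 \<le> t \<and> X t w \<in> B", OF t] by auto
  show "\<And>u. 1 \<le> u \<Longrightarrow> u < hit_time X B w \<Longrightarrow> X u w \<notin> B"
    unfolding hit_time_def using not_less_Least by blast
  show "\<And>t. 1 \<le> t \<Longrightarrow> X t w \<in> B \<Longrightarrow> hit_time X B w \<le> t"
    unfolding hit_time_def by (auto intro: Least_le)
qed

lemma exitB_pref:
  "exitB v B n (pref n w) = (if \<exists>t\<in>{1..n}. X t w \<in> B then v (X (hit_time X B w) w) else 0)"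
proof (cases "\<exists>t\<in>{1..n}. X t w \<in> B")
  case True
  then have ex: "\<exists>t\<ge>1. X t w \<in> B" by auto
  define T where "T = hit_time X B w"
  note hp = hit_props[OF ex, folded T_def]
  obtain t0 where t0: "t0 \<in> {1..n}" "X t0 w \<in> B" using True by auto
  have Tn: "T \<le> n" using hp(4)[of t0] t0 by auto
  have "exitB v B n (pref n w) = (\<Sum>t<n. (if t = T - 1 then v (X T w) else 0))"
    unfolding exitB_def
  proof (intro sum.cong refl)
    fix t assume t: "t \<in> {..<n}"
    have "(X (Suc t) w \<in> B \<and> (\<forall>u\<in>{1..t}. X u w \<notin> B)) \<longleftrightarrow> t = T - 1"
    proof
      assume a: "X (Suc t) w \<in> B \<and> (\<forall>u\<in>{1..t}. X u w \<notin> B)"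
      have "T \<le> Suc t" using hp(4)[of "Suc t"] a by auto
      moreover have "\<not> T \<le> t" using a hp(1,2) by auto
      ultimately show "t = T - 1" by auto
    next
      assume "t = T - 1"
      then have "Suc t = T" using hp(1) by auto
      then show "X (Suc t) w \<in> B \<and> (\<forall>u\<in>{1..t}. X u w \<notin> B)" using hp(2,3) by auto
    qed
    moreover have "pref n w ! Suc t = X (Suc t) w" using t by simp
    moreover have "\<forall>u\<in>{1..t}. pref n w ! u = X u w" using t by auto
    ultimately show "(if pref n w ! Suc t \<in> B \<and> (\<forall>u\<in>{1..t}. pref n w ! u \<notin> B) then v (pref n w ! Suc t) else 0)
        = (if t = T - 1 then v (X T w) else 0)"
      using hp(1) by (auto simp del: pref_nth)
  qed
  also have "\<dots> = v (X T w)"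
    using Tn hp(1) by (subst sum.delta) auto
  finally show ?thesis using True T_def by simp
next
  case False
  have "exitB v B n (pref n w) = 0"
    unfolding exitB_def
  proof (intro sum.neutral ballI)
    fix t assume t: "t \<in> {..<n}"
    then have "X (Suc t) w \<notin> B" using False by auto
    then show "(if pref n w ! Suc t \<in> B \<and> (\<forall>u\<in>{1..t}. pref n w ! u \<notin> B) then v (pref n w ! Suc t) else 0) = 0"
      using t by simp
  qed
  then show ?thesis using False by simp
qed

lemma sumB_pref_hit:
  assumes ex: "\<exists>t\<ge>1. X t w \<in> B"
  shows "sumB v B n (pref n w) = (\<Sum>t<min n (hit_time X B w). v (X t w))"
proof -
  define T where "T = hit_time X B w"
  note hp = hit_props[OF ex, folded T_def]
  have "sumB v B n (pref n w) = (\<Sum>t<n. if t < T then v (X t w) else 0)"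
    unfolding sumB_def
  proof (intro sum.cong refl)
    fix t assume t: "t \<in> {..<n}"
    have "(\<forall>u\<in>{1..t}. X u w \<notin> B) \<longleftrightarrow> t < T"
      using hp by (auto simp: not_less intro: le_trans)
    moreover have "\<forall>u\<in>{1..t}. pref n w ! u = X u w" using t by auto
    moreover have "pref n w ! t = X t w" using t by auto
    ultimately show "v (pref n w ! t) * (if \<forall>u\<in>{1..t}. pref n w ! u \<notin> B then 1 else 0) = (if t < T then v (X t w) else 0)"
      using t by (auto simp del: pref_nth)
  qed
  also have "\<dots> = (\<Sum>t\<in>{..<n} \<inter> {t. t < T}. v (X t w))"
    by (simp add: sum.inter_restrict)
  also have "{..<n} \<inter> {t. t < T} = {..<min n T}" by auto
  finally show ?thesis by (simp add: T_def)
qed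

lemma SUP_min_sum: "(SUP n. (\<Sum>t<min n (T::nat). f t)) = (\<Sum>t<T. f t :: ennreal)"
proof (rule antisym)
  show "(SUP n. (\<Sum>t<min n T. f t)) \<le> (\<Sum>t<T. f t)"
    by (intro SUP_least sum_mono2) (auto simp: min_def)
  show "(\<Sum>t<T. f t) \<le> (SUP n. (\<Sum>t<min n T. f t))"
    by (rule SUP_upper2[where i=T]) auto
qed

lemma sumB_pref_mono: "sumB v B n (pref n w) \<le> sumB v B (Suc n) (pref (Suc n) w)"
  by (subst sumB_pref[of n "Suc n"], simp, rule sumB_mono_n)

lemma E1:
  assumes hit: "AE w in M i. \<exists>t\<ge>1. X t w \<in> B"
  shows "(\<integral>\<^sup>+w. (\<Sum>t<hit_time X B w. v (X t w)) \<partial>M i) = Phi B v i"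
proof -
  have "(\<integral>\<^sup>+w. (\<Sum>t<hit_time X B w. v (X t w)) \<partial>M i) = (\<integral>\<^sup>+w. (SUP n. sumB v B n (pref n w)) \<partial>M i)"
    apply (intro nn_integral_cong_AE)
    using hit apply eventually_elim
    by (simp add: sumB_pref_hit SUP_min_sum)
  also have "\<dots> = (SUP n. Phin B v n i)"
    unfolding Phin_def
    by (rule nn_integral_monotone_convergence_SUP) (auto intro!: incseq_SucI le_funI sumB_pref_mono)
  finally show ?thesis unfolding Phi_def .
qed

lemma E2:
  assumes hit: "AE w in M i. \<exists>t\<ge>1. X t w \<in> B"
  shows "(\<integral>\<^sup>+w. v (X (hit_time X B w) w) \<partial>M i) = Phi B (Tr B v) i"
proof -
  have "(\<integral>\<^sup>+w. v (X (hit_time X B w) w) \<partial>M i) = (\<integral>\<^sup>+w. (SUP n. exitB v B n (pref n w)) \<partial>M i)"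
  proof (intro nn_integral_cong_AE)
    show "AE w in M i. v (X (hit_time X B w) w) = (SUP n. exitB v B n (pref n w))"
      using hit
    proof eventually_elim
      case (elim w)
      then obtain t where t: "1 \<le> t" "X t w \<in> B" by auto
      show ?case
      proof (rule antisym)
        show "v (X (hit_time X B w) w) \<le> (SUP n. exitB v B n (pref n w))"
          by (rule SUP_upper2[where i=t]) (use t in \<open>auto simp: exitB_pref\<close>)
        show "(SUP n. exitB v B n (pref n w)) \<le> v (X (hit_time X B w) w)"
          by (rule SUP_least) (auto simp: exitB_pref)
      qed
    qed
  qed
  also have "\<dots> = (SUP n. Psin B v n i)"
    unfolding Psin_def
  proof (rule nn_integral_monotone_convergence_SUP)
    show "incseq (\<lambda>n w. exitB v B n (pref n w))"
      by (intro incseq_SucI le_funI) (auto simp: exitB_pref)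
  qed auto
  finally show ?thesis unfolding Phi_def Psin_eq_Phin .
qed

lemma hit_event_sets[measurable]: "{w \<in> space (M i). \<exists>t\<in>{1..n}. X t w \<in> B} \<in> sets (M i)"
  by measurable

lemma hit_event_sets'[measurable]: "{w \<in> space (M i). \<exists>t\<ge>1. X t w \<in> B} \<in> sets (M i)"
  by measurable

lemma Phi_hit: "Phi B (Tr B (\<lambda>_. 1)) i = emeasure (M i) {w \<in> space (M i). \<exists>t\<ge>1. X t w \<in> B}"
proof -
  have "Phin B (Tr B (\<lambda>_. 1)) n i = emeasure (M i) {w \<in> space (M i). \<exists>t\<in>{1..n}. X t w \<in> B}" for n
  proof -
    have "Phin B (Tr B (\<lambda>_. 1)) n i = (\<integral>\<^sup>+w. indicator {w \<in> space (M i). \<exists>t\<in>{1..n}. X t w \<in> B} w \<partial>M i)"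
      unfolding Psin_eq_Phin[symmetric] Psin_def
      by (intro nn_integral_cong) (auto simp: exitB_pref indicator_def)
    then show ?thesis by simp
  qed
  then have "Phi B (Tr B (\<lambda>_. 1)) i = (SUP n. emeasure (M i) {w \<in> space (M i). \<exists>t\<in>{1..n}. X t w \<in> B})"
    unfolding Phi_def by simp
  also have "\<dots> = emeasure (M i) (\<Union>n. {w \<in> space (M i). \<exists>t\<in>{1..n}. X t w \<in> B})"
    by (rule SUP_emeasure_incseq) (auto intro!: incseq_SucI)
  also have "(\<Union>n. {w \<in> space (M i). \<exists>t\<in>{1..n}. X t w \<in> B}) = {w \<in> space (M i). \<exists>t\<ge>1. X t w \<in> B}"
  proof (intro equalityI subsetI)
    fix w assume "w \<in> (\<Union>n. {w \<in> space (M i). \<exists>t\<in>{1..n}. X t w \<in> B})"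
    then show "w \<in> {w \<in> space (M i). \<exists>t\<ge>1. X t w \<in> B}" by auto
  next
    fix w assume "w \<in> {w \<in> space (M i). \<exists>t\<ge>1. X t w \<in> B}"
    then obtain t where "1 \<le> t" "X t w \<in> B" "w \<in> space (M i)" by auto
    then show "w \<in> (\<Union>n. {w \<in> space (M i). \<exists>t\<in>{1..n}. X t w \<in> B})"
      by (intro UN_I[of t]) auto
  qed
  finally show ?thesis .
qed

end

locale MCI = MC P M X for P :: "'s::countable \<Rightarrow> 's \<Rightarrow> real" and M :: "'s \<Rightarrow> 'w measure" and X +
  fixes \<pi> :: "'s \<Rightarrow> real"
  assumes irr: "irreducible_mc M X" and pr: "positive_recurrent_mc M X"
    and inv: "invariant_distribution P \<pi>"
begin

lemma pi_nonneg[simp]: "0 \<le> \<pi> k"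
  using inv unfolding invariant_distribution_def by auto

definition pif :: "('s \<Rightarrow> ennreal) \<Rightarrow> ennreal" where
  "pif v = (\<integral>\<^sup>+k. ennreal (\<pi> k) * v k \<partial>count_space UNIV)"

lemma pi_sum: "(\<integral>\<^sup>+k. ennreal (\<pi> k) \<partial>count_space UNIV) = 1"
  using inv unfolding invariant_distribution_def by (subst nn_sum_real) auto

lemma pi_inv: "(\<integral>\<^sup>+l. ennreal (\<pi> l) * ennreal (P l k) \<partial>count_space UNIV) = ennreal (\<pi> k)"
proof -
  have "(\<lambda>l. \<pi> l * P l k) summable_on UNIV" "(\<Sum>\<^sub>\<infinity>l. \<pi> l * P l k) = \<pi> k"
    using inv unfolding invariant_distribution_def by auto
  then show ?thesis by (simp add: ennreal_mult'[symmetric] nn_sum_real)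
qed

lemma pif_Tr: "pif (Tr S u) = (\<integral>\<^sup>+l. ennreal (\<pi> l) * (indicator S l * u l) \<partial>count_space UNIV)"
proof -
  have "pif (Tr S u) = (\<integral>\<^sup>+k. (\<integral>\<^sup>+l. ennreal (\<pi> k) * ennreal (P k l) * (indicator S l * u l) \<partial>count_space UNIV) \<partial>count_space UNIV)"
    unfolding pif_def Tr_def by (simp add: nn_integral_cmult[symmetric] mult.assoc)
  also have "\<dots> = (\<integral>\<^sup>+l. (\<integral>\<^sup>+k. ennreal (\<pi> k) * ennreal (P k l) * (indicator S l * u l) \<partial>count_space UNIV) \<partial>count_space UNIV)"
    by (rule nn_integral_count_space_nn_integral) auto
  also have "\<dots> = (\<integral>\<^sup>+l. ennreal (\<pi> l) * (indicator S l * u l) \<partial>count_space UNIV)"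
    by (simp add: nn_integral_multc pi_inv)
  finally show ?thesis .
qed

lemma pif_TrU: "pif (Tr UNIV u) = pif u"
  by (simp add: pif_Tr) (simp add: pif_def)

lemma pif_add: "pif (\<lambda>k. v k + w k) = pif v + pif w"
  unfolding pif_def by (simp add: distrib_left nn_integral_add)

lemma pif_cmult: "pif (\<lambda>k. c * v k) = c * pif v"
  unfolding pif_def by (subst nn_integral_cmult[symmetric]) (auto intro!: nn_integral_cong simp: mult_ac)

lemma pif_mono: "(\<And>k. v k \<le> w k) \<Longrightarrow> pif v \<le> pif w"
  unfolding pif_def by (intro nn_integral_mono mult_left_mono) auto

lemma pif_1: "pif (\<lambda>_. 1) = 1"
  unfolding pif_def by (simp add: pi_sum)

lemma pif_single: "pif (indicator {j}) = ennreal (\<pi> j)"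
proof -
  have "pif (indicator {j}) = (\<integral>\<^sup>+k. ennreal (\<pi> k) * indicator {j} k \<partial>count_space UNIV)"
    unfolding pif_def ..
  also have "\<dots> = ennreal (\<pi> j)" by simp
  finally show ?thesis .
qed

lemma pif_split: "pif u = (\<integral>\<^sup>+l. ennreal (\<pi> l) * (indicator (-{j}) l * u l) \<partial>count_space UNIV) + ennreal (\<pi> j) * u j"
proof -
  have "pif u = (\<integral>\<^sup>+l. ennreal (\<pi> l) * (indicator (-{j}) l * u l) + (ennreal (\<pi> l) * u l) * indicator {j} l \<partial>count_space UNIV)"
    unfolding pif_def by (intro nn_integral_cong) (auto simp: indicator_def)
  also have "\<dots> = (\<integral>\<^sup>+l. ennreal (\<pi> l) * (indicator (-{j}) l * u l) \<partial>count_space UNIV) + ennreal (\<pi> j) * u j"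
    by (subst nn_integral_add) auto
  finally show ?thesis .
qed

lemma nn_count_zero: "(\<integral>\<^sup>+l. f l \<partial>count_space UNIV) = 0 \<Longrightarrow> f l = 0"
  by (simp add: nn_integral_0_iff_AE AE_count_space)

lemma nn_count_ge: "f l \<le> (\<integral>\<^sup>+l. f l \<partial>count_space UNIV)"
proof -
  have "f l = (\<integral>\<^sup>+x. f x * indicator {l} x \<partial>count_space UNIV)" by simp
  also have "\<dots> \<le> (\<integral>\<^sup>+l. f l \<partial>count_space UNIV)"
    by (intro nn_integral_mono) (auto simp: indicator_def)
  finally show ?thesis .
qed

lemma pn_single_meas: "pn t (indicator {j}) i = emeasure (M i) {w \<in> space (M i). X t w = j}"
proof -
  have "pn t (indicator {j}) i = (\<integral>\<^sup>+w. indicator {w \<in> space (M i). X t w = j} w \<partial>M i)"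
    unfolding pn_def by (intro nn_integral_cong) (auto simp: indicator_def)
  then show ?thesis by simp
qed

lemma irr_pos: "\<exists>n. 0 < pn n (indicator {j}) i"
proof (rule ccontr)
  assume "\<not> ?thesis"
  then have z: "\<And>n. emeasure (M i) {w \<in> space (M i). X n w = j} = 0"
    by (simp add: pn_single_meas)
  have "emeasure (M i) (\<Union>n. {w \<in> space (M i). X n w = j}) = 0"
    by (rule emeasure_UN_eq_0) (use z in auto)
  moreover have "(\<Union>n. {w \<in> space (M i). X n w = j}) = {w \<in> space (M i). \<exists>t. X t w = j}" by auto
  ultimately have "measure (M i) {w \<in> space (M i). \<exists>t. X t w = j} = 0"
    by (simp add: measure_def)
  moreover have "0 < measure (M i) {w \<in> space (M i). \<exists>t. X t w = j}"
    using irr unfolding irreducible_mc_def by blast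
  ultimately show False by simp
qed

lemma closure:
  assumes a: "a \<in> S" and cl: "\<And>m l. m \<in> S \<Longrightarrow> 0 < P m l \<Longrightarrow> l \<in> S"
  shows "i \<in> S"
proof -
  obtain n where n: "0 < pn n (indicator {i}) a" using irr_pos by blast
  have "\<And>m. m \<in> S \<Longrightarrow> 0 < pn n (indicator {i}) m \<Longrightarrow> i \<in> S"
  proof (induction n)
    case 0 then show ?case by (cases "m = i") (auto simp: pn_0 indicator_def)
  next
    case (Suc n)
    have "Tr UNIV (pn n (indicator {i})) m \<noteq> 0" using Suc.prems by (simp add: pn_Suc)
    then have "\<exists>l. ennreal (P m l) * (indicator UNIV l * pn n (indicator {i}) l) \<noteq> 0"
    proof (rule contrapos_np)
      assume "\<not> (\<exists>l. ennreal (P m l) * (indicator UNIV l * pn n (indicator {i}) l) \<noteq> 0)"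
      then have "(\<lambda>l. ennreal (P m l) * (indicator UNIV l * pn n (indicator {i}) l)) = (\<lambda>l. 0)" by auto
      then show "Tr UNIV (pn n (indicator {i})) m = 0" unfolding Tr_def by simp
    qed
    then obtain l where l: "ennreal (P m l) * (indicator UNIV l * pn n (indicator {i}) l) \<noteq> 0"
      by blast
    then have "0 < P m l" "0 < pn n (indicator {i}) l"
      using P_nonneg[of m l] by (auto simp: ennreal_zero_less_mult_iff less_le)
    with Suc.IH[of l] cl[OF Suc.prems(1)] show ?case by (auto simp: pos2)
  qed
  with n a show ?thesis by blast
qed

lemma Tr_zero_pt: "Tr S u m = 0 \<Longrightarrow> l \<in> S \<Longrightarrow> 0 < P m l \<Longrightarrow> u l = 0"
  unfolding Tr_def by (drule nn_count_zero[where l=l]) (auto simp: indicator_def)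

lemma Tr_ge_pt: "l \<in> S \<Longrightarrow> ennreal (P m l) * u l \<le> Tr S u m"
  unfolding Tr_def using nn_count_ge[of "\<lambda>l. ennreal (P m l) * (indicator S l * u l)" l] by simp

definition rho where "rho a i = Phi {a} (Tr {a} (\<lambda>_. 1)) i"

lemma rho_eq: "rho a i = emeasure (M i) {w \<in> space (M i). \<exists>t\<ge>1. X t w \<in> {a}}"
  unfolding rho_def by (rule Phi_hit)

lemma rho_le1: "rho a i \<le> 1"
  unfolding rho_eq using prob_space.emeasure_le_1[OF prob] by simp

lemma rho_self: "rho a a = 1"
proof -
  interpret prob_space "M a" by simp
  have "AE w in M a. \<exists>t\<ge>1. X t w = a" using pr unfolding positive_recurrent_mc_def by blast
  then show ?thesis unfolding rho_eq by (intro emeasure_eq_1_AE) auto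
qed

lemma Tr_finite: "(\<And>l. u l \<le> 1) \<Longrightarrow> Tr S u i \<le> 1"
  using Tr_mono_set[of S UNIV u i] Tr_mono[of u "\<lambda>_. 1" UNIV i] Tr_UNIV_1[of i] by auto

lemma rho_1: "rho a i = 1"
proof (rule closure[where S="{i. rho a i = 1}", simplified])
  show "rho a a = 1" by (rule rho_self)
  fix m l assume m: "rho a m = 1" and P: "0 < P m l"
  show "rho a l = 1"
  proof (cases "l = a")
    case True then show ?thesis using rho_self by simp
  next
    case False
    have fx: "rho a m = Tr {a} (\<lambda>_. 1) m + Tr (-{a}) (rho a) m"
      unfolding rho_def by (rule Phi_fix)
    have one: "1 = Tr {a} (\<lambda>_. 1) m + Tr (-{a}) (\<lambda>_. 1) m"
      using Tr_split[of "\<lambda>_. 1" m "{a}"] Tr_UNIV_1 by simp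
    have fin: "Tr {a} (\<lambda>_. 1) m \<noteq> \<infinity>" using Tr_finite[of "\<lambda>_. 1" "{a}" m] by (auto simp: top_unique)
    have "Tr {a} (\<lambda>_. 1) m + Tr (-{a}) (rho a) m = Tr {a} (\<lambda>_. 1) m + Tr (-{a}) (\<lambda>_. 1) m"
      using fx one m by simp
    then have e1: "Tr (-{a}) (rho a) m = Tr (-{a}) (\<lambda>_. 1) m"
      using fin by (simp add: ennreal_add_left_cancel)
    have "Tr (-{a}) (\<lambda>_. 1) m = Tr (-{a}) (\<lambda>l. rho a l + (1 - rho a l)) m"
      by (simp add: add_diff_inverse_ennreal rho_le1)
    also have "\<dots> = Tr (-{a}) (rho a) m + Tr (-{a}) (\<lambda>l. 1 - rho a l) m"
      by (rule Tr_add)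
    finally have e2: "Tr (-{a}) (rho a) m + 0 = Tr (-{a}) (rho a) m + Tr (-{a}) (\<lambda>l. 1 - rho a l) m"
      using e1 by simp
    have "Tr (-{a}) (rho a) m \<noteq> \<infinity>"
      using Tr_finite[of "rho a" "-{a}" m] rho_le1 by (auto simp: top_unique)
    then have "Tr (-{a}) (\<lambda>l. 1 - rho a l) m = 0"
      using e2 by (simp add: ennreal_add_left_cancel)
    then have "1 - rho a l = 0" using Tr_zero_pt[of "-{a}" "\<lambda>l. 1 - rho a l" m l] False P by auto
    then have "1 \<le> rho a l" by (simp add: diff_eq_0_iff_ennreal)
    then show ?thesis using rho_le1[of a l] by (rule antisym[rotated])
  qed
qed

lemma hit_AE: assumes "B \<noteq> {}" shows "AE w in M i. \<exists>t\<ge>1. X t w \<in> B"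
proof -
  interpret prob_space "M i" by simp
  obtain a where a: "a \<in> B" using assms by auto
  have "emeasure (M i) {w \<in> space (M i). \<exists>t\<ge>1. X t w \<in> {a}} = 1"
    using rho_1 rho_eq by simp
  then have "prob {w \<in> space (M i). \<exists>t\<ge>1. X t w \<in> {a}} = 1"
    by (simp add: emeasure_eq_measure)
  then have "AE w in M i. w \<in> {w \<in> space (M i). \<exists>t\<ge>1. X t w \<in> {a}}"
    by (rule AE_prob_1)
  then show ?thesis by eventually_elim (use a in auto)
qed

end

context MCI begin

lemma pif_Tr_le: "pif (Tr (-{j}) u) \<le> pif u"
  unfolding pif_Tr by (subst pif_split[of u j]) simp

lemma N1:
  assumes fv: "pif v \<noteq> \<infinity>"
  shows "ennreal (\<pi> j) * Phi {j} v j \<le> pif v"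
proof -
  have fin: "pif (Phin {j} v n) \<noteq> \<infinity>" for n
  proof (induction n)
    case 0 then show ?case by (simp add: pif_def)
  next
    case (Suc n)
    have "pif (Phin {j} v (Suc n)) = pif v + pif (Tr (-{j}) (Phin {j} v n))"
      by (simp add: Phin_Suc[abs_def] pif_add)
    also have "\<dots> \<le> pif v + pif (Phin {j} v n)"
      by (intro add_left_mono pif_Tr_le)
    finally show ?case using Suc fv by (auto simp: top_unique)
  qed
  have step: "ennreal (\<pi> j) * Phin {j} v n j \<le> pif v" for n
  proof -
    define c where "c = (\<integral>\<^sup>+l. ennreal (\<pi> l) * (indicator (-{j}) l * Phin {j} v n l) \<partial>count_space UNIV)"
    have a: "pif (Phin {j} v (Suc n)) = pif v + c"
      by (simp add: Phin_Suc[abs_def] pif_add pif_Tr c_def)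
    have b: "pif (Phin {j} v n) = c + ennreal (\<pi> j) * Phin {j} v n j"
      unfolding c_def by (rule pif_split)
    have m: "pif (Phin {j} v n) \<le> pif (Phin {j} v (Suc n))"
      by (intro pif_mono Phin_mono_n)
    have cf: "c \<noteq> \<infinity>" using fin[of n] b by auto
    have "c + ennreal (\<pi> j) * Phin {j} v n j \<le> c + pif v"
      using a b m by (simp add: add.commute)
    then show ?thesis using cf by (simp add: ennreal_add_left_cancel_le)
  qed
  show ?thesis
    unfolding Phi_def SUP_mult_left_ennreal by (rule SUP_least) (rule step)
qed

lemma Phi_TrU: "Phi B (Tr UNIV v) i + v i = Phi B v i + Phi B (Tr B v) i"
proof -
  have "Tr UNIV v = (\<lambda>i. Tr B v i + Tr (-B) v i)" by (rule ext, rule Tr_split)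
  then have "Phi B (Tr UNIV v) i = Phi B (Tr B v) i + Phi B (Tr (-B) v) i"
    by (simp add: Phi_add)
  also have "Phi B (Tr (-B) v) i = Tr (-B) (Phi B v) i" by (rule Phi_commute)
  finally show ?thesis using Phi_fix[of B v i] by (simp add: ac_simps)
qed

lemma rho_Phi: "Phi {j} (Tr {j} (\<lambda>_. 1)) i = 1"
  using rho_1 unfolding rho_def .

lemma N2:
  assumes fin: "\<And>k. v k \<noteq> \<infinity>"
  shows "Phi {j} (Tr UNIV v) j = Phi {j} v j"
proof -
  have "Tr {j} v = (\<lambda>i. v j * Tr {j} (\<lambda>_. 1) i)" by (rule ext) (simp add: Tr_single mult.commute)
  then have "Phi {j} (Tr {j} v) j = v j" by (simp add: Phi_cmult rho_Phi)
  then have "v j + Phi {j} (Tr UNIV v) j = v j + Phi {j} v j"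
    using Phi_TrU[of "{j}" v j] by (simp add: add.commute)
  then show ?thesis using fin[of j] by (simp add: ennreal_add_left_cancel)
qed

lemma N3: "Phi {j} (indicator {j}) i = indicator {j} i"
proof (rule antisym)
  have z: "Tr (-{j}) (indicator {j}) i = 0" for i
  proof -
    have "(\<lambda>l. ennreal (P i l) * (indicator (-{j}) l * indicator {j} l)) = (\<lambda>_. 0)"
      by (auto simp: indicator_def)
    then show ?thesis unfolding Tr_def by simp
  qed
  show "Phi {j} (indicator {j}) i \<le> indicator {j} i"
    by (rule Phi_min) (simp add: z)
  show "indicator {j} i \<le> Phi {j} (indicator {j}) i" by (rule Phi_ge)
qed

lemma pn_le1: "pn n (indicator {a}) i \<le> 1"
  unfolding pn_single_meas using prob_space.emeasure_le_1[OF prob] by simp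

lemma pn_fun_Suc: "pn (Suc n) u = Tr UNIV (pn n u)"
  by (rule ext) (rule pn_Suc)

lemma Phi_pn: "Phi {j} (pn n (indicator {a})) j = Phi {j} (indicator {a}) j"
proof (induction n)
  case 0 then show ?case by (simp add: pn_0[abs_def])
next
  case (Suc n)
  have "pn n (indicator {a}) k \<noteq> \<infinity>" for k using pn_le1[of n a k] by (auto simp: top_unique)
  then show ?case by (simp add: pn_fun_Suc N2 Suc)
qed

lemma pif_pn: "pif (pn n u) = pif u"
  by (induction n) (simp_all add: pn_0[abs_def] pn_fun_Suc pif_TrU)

lemma ennreal_sandwich:
  fixes a b c d :: ennreal
  assumes "a \<le> b" "c \<le> d" "a + c = b + d" "b + d \<noteq> \<infinity>"
  shows "a = b"
proof -
  have "a + c \<le> a + d" using assms by (intro add_left_mono)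
  moreover have "a + d \<le> b + d" using assms by (intro add_right_mono)
  ultimately have x: "a + d \<le> b + d" "b + d \<le> a + d" using assms(3) by auto
  then have "d + a = d + b" by (simp add: add.commute antisym)
  moreover have "d \<noteq> \<infinity>" using assms(4) by auto
  ultimately show ?thesis by (simp add: ennreal_add_left_cancel)
qed

lemma N4: "ennreal (\<pi> j) * Phi {j} (indicator {k}) j = ennreal (\<pi> k)"
proof -
  obtain n where cpos: "0 < pn n (indicator {j}) k" using irr_pos by blast
  define w where "w = pn n (indicator {j})"
  define c where "c = w k"
  have c0: "c \<noteq> 0" using cpos by (simp add: c_def w_def)
  have c1: "c \<noteq> \<infinity>" using pn_le1[of n j k] by (auto simp: c_def w_def top_unique)
  have nw: "ennreal (\<pi> j) * Phi {j} w j = ennreal (\<pi> j)"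
    unfolding w_def Phi_pn by (simp add: N3)
  have pw: "pif w = ennreal (\<pi> j)"
    unfolding w_def pif_pn by (rule pif_single)
  define v where "v = (\<lambda>l. c * indicator {k} l)"
  define x where "x = (\<lambda>l. w l - v l)"
  have vw: "v l \<le> w l" for l by (auto simp: v_def c_def indicator_def)
  have wsum: "w = (\<lambda>l. v l + x l)" by (rule ext) (simp add: x_def add_diff_inverse_ennreal vw)
  have e1: "ennreal (\<pi> j) * Phi {j} w j = ennreal (\<pi> j) * Phi {j} v j + ennreal (\<pi> j) * Phi {j} x j"
    by (subst wsum) (simp add: Phi_add distrib_left)
  have e2: "pif w = pif v + pif x" by (subst wsum) (simp add: pif_add)
  have fv: "pif v \<noteq> \<infinity>" "pif x \<noteq> \<infinity>" using e2 pw by auto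
  have "ennreal (\<pi> j) * Phi {j} v j = pif v"
    by (rule ennreal_sandwich[OF N1[where v=v and j=j, OF fv(1)] N1[where v=x and j=j, OF fv(2)]]) (use e1 e2 nw pw in auto)
  moreover have "ennreal (\<pi> j) * Phi {j} v j = c * (ennreal (\<pi> j) * Phi {j} (indicator {k}) j)"
    unfolding v_def by (simp add: Phi_cmult mult_ac)
  moreover have "pif v = c * ennreal (\<pi> k)"
    unfolding v_def by (simp add: pif_cmult pif_single)
  ultimately show ?thesis using c0 c1 by (simp add: ennreal_mult_cancel_left)
qed

lemma N5: "ennreal (\<pi> j) * Phi {j} v j = pif v"
proof -
  have "ennreal (\<pi> j) * Phi {j} v j = (\<integral>\<^sup>+k. v k * (ennreal (\<pi> j) * Phi {j} (indicator {k}) j) \<partial>count_space UNIV)"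
    by (subst Phi_sum) (simp add: nn_integral_cmult[symmetric] mult_ac)
  also have "\<dots> = pif v" unfolding pif_def N4 by (simp add: mult.commute)
  finally show ?thesis .
qed

lemma pi_pos: "0 < \<pi> j"
proof -
  have "ennreal (\<pi> j) * Phi {j} (\<lambda>_. 1) j = 1" using N5[of j "\<lambda>_. 1"] pif_1 by simp
  then have "\<pi> j \<noteq> 0" by auto
  then show ?thesis using pi_nonneg[of j] by linarith
qed

lemma Phi_fin:
  assumes fv: "pif v \<noteq> \<infinity>"
  shows "Phi {a} v i \<noteq> \<infinity>"
proof -
  have "i \<in> {i. Phi {a} v i \<noteq> \<infinity>}"
  proof (rule closure)
  have "ennreal (\<pi> a) * Phi {a} v a \<noteq> \<infinity>" using N5[of a v] fv by simp
  then show "a \<in> {i. Phi {a} v i \<noteq> \<infinity>}" using pi_pos[of a] by (auto simp: ennreal_mult_eq_top_iff)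
  fix m l assume m': "m \<in> {i. Phi {a} v i \<noteq> \<infinity>}" and P: "0 < P m l"
  then have m: "Phi {a} v m \<noteq> \<infinity>" by simp
  show "l \<in> {i. Phi {a} v i \<noteq> \<infinity>}"
  proof (cases "l = a")
    case True
    have "ennreal (\<pi> a) * Phi {a} v a \<noteq> \<infinity>" using N5[of a v] fv by simp
    then show ?thesis using pi_pos[of a] True by (auto simp: ennreal_mult_eq_top_iff)
  next
    case False
    have "ennreal (P m l) * Phi {a} v l \<le> Tr (-{a}) (Phi {a} v) m"
      using False by (intro Tr_ge_pt) auto
    also have "\<dots> \<le> Phi {a} v m" using le_sum_r[of "Tr (-{a}) (Phi {a} v) m" "v m"] Phi_fix[of "{a}" v m] by simp
    finally have "ennreal (P m l) * Phi {a} v l \<noteq> \<infinity>" using m by (auto simp: top_unique)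
    then show ?thesis using P by (auto simp: ennreal_mult_eq_top_iff)
  qed
  qed
  then show ?thesis by simp
qed

end

context MCI begin

lemma ennreal_max0: "ennreal (max x 0) = ennreal x"
  by (cases "x \<ge> 0") (auto simp: max_def ennreal_neg)

lemma sum_hit_meas[measurable]:
  fixes \<psi> :: "'s \<Rightarrow> real"
  shows "(\<lambda>w. \<Sum>t<hit_time X B w. \<psi> (X t w)) \<in> borel_measurable (M i)"
  by (rule measurable_compose_countable'[where f="\<lambda>n w. \<Sum>t<n. \<psi> (X t w)" and g="hit_time X B" and I=UNIV]) auto

lemma exit_meas[measurable]:
  fixes \<psi> :: "'s \<Rightarrow> real"
  shows "(\<lambda>w. \<psi> (X (hit_time X B w) w)) \<in> borel_measurable (M i)"
  by (rule measurable_compose_countable'[where f="\<lambda>n w. \<psi> (X n w)" and g="hit_time X B" and I=UNIV]) auto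

lemma RE1:
  fixes \<psi> :: "'s \<Rightarrow> real"
  assumes B: "B \<noteq> {}" and nn: "\<And>k. 0 \<le> \<psi> k" and fin: "Phi B (\<lambda>k. ennreal (\<psi> k)) i \<noteq> \<infinity>"
  shows "integrable (M i) (\<lambda>w. \<Sum>t<hit_time X B w. \<psi> (X t w))"
    "(\<integral>w. (\<Sum>t<hit_time X B w. \<psi> (X t w)) \<partial>M i) = enn2real (Phi B (\<lambda>k. ennreal (\<psi> k)) i)"
proof -
  have eq: "(\<integral>\<^sup>+w. ennreal (\<Sum>t<hit_time X B w. \<psi> (X t w)) \<partial>M i) = Phi B (\<lambda>k. ennreal (\<psi> k)) i"
    using E1[OF hit_AE[OF B], of i "\<lambda>k. ennreal (\<psi> k)"] nn by (simp add: sum_ennreal)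
  show "integrable (M i) (\<lambda>w. \<Sum>t<hit_time X B w. \<psi> (X t w))"
    by (rule integrableI_nonneg) (use eq fin nn in \<open>auto simp: sum_nonneg top.not_eq_extremum\<close>)
  show "(\<integral>w. (\<Sum>t<hit_time X B w. \<psi> (X t w)) \<partial>M i) = enn2real (Phi B (\<lambda>k. ennreal (\<psi> k)) i)"
    by (subst integral_eq_nn_integral) (use eq nn in \<open>auto simp: sum_nonneg\<close>)
qed

lemma RE1s:
  fixes \<phi> :: "'s \<Rightarrow> real"
  assumes B: "B \<noteq> {}" and fin: "Phi B (\<lambda>k. ennreal \<bar>\<phi> k\<bar>) i \<noteq> \<infinity>"
  shows "y_val M X \<phi> B i = enn2real (Phi B (\<lambda>k. ennreal (\<phi> k)) i) - enn2real (Phi B (\<lambda>k. ennreal (- \<phi> k)) i)"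
proof -
  define p where "p k = max (\<phi> k) 0" for k
  define m where "m k = max (- \<phi> k) 0" for k
  have "Phi B (\<lambda>k. ennreal (p k)) i \<le> Phi B (\<lambda>k. ennreal \<bar>\<phi> k\<bar>) i"
    by (rule Phi_mono) (auto simp: p_def)
  then have fp: "Phi B (\<lambda>k. ennreal (p k)) i \<noteq> \<infinity>" using fin by (auto simp: top_unique)
  have "Phi B (\<lambda>k. ennreal (m k)) i \<le> Phi B (\<lambda>k. ennreal \<bar>\<phi> k\<bar>) i"
    by (rule Phi_mono) (auto simp: m_def)
  then have fm: "Phi B (\<lambda>k. ennreal (m k)) i \<noteq> \<infinity>" using fin by (auto simp: top_unique)
  note r1 = RE1[of B p i, OF B _ fp] RE1[of B m i, OF B _ fm]
  have "(\<lambda>w. \<Sum>t<hit_time X B w. \<phi> (X t w)) = (\<lambda>w. (\<Sum>t<hit_time X B w. p (X t w)) - (\<Sum>t<hit_time X B w. m (X t w)))"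
    by (rule ext) (simp add: sum_subtractf[symmetric] p_def m_def max_def, rule sum.cong, auto)
  then have "y_val M X \<phi> B i = (\<integral>w. (\<Sum>t<hit_time X B w. p (X t w)) \<partial>M i) - (\<integral>w. (\<Sum>t<hit_time X B w. m (X t w)) \<partial>M i)"
    unfolding y_val_def using r1 by (simp add: p_def m_def)
  also have "\<dots> = enn2real (Phi B (\<lambda>k. ennreal (p k)) i) - enn2real (Phi B (\<lambda>k. ennreal (m k)) i)"
    using r1 by (simp add: p_def m_def)
  finally show ?thesis by (simp add: p_def m_def ennreal_max0)
qed

lemma RE_tau:
  assumes B: "B \<noteq> {}" and fin: "Phi B (\<lambda>_. 1) i \<noteq> \<infinity>"
  shows "tau_val M X B i = enn2real (Phi B (\<lambda>_. 1) i)"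
proof -
  have "tau_val M X B i = (\<integral>w. (\<Sum>t<hit_time X B w. (\<lambda>_. 1::real) (X t w)) \<partial>M i)"
    unfolding tau_val_def by simp
  also have "\<dots> = enn2real (Phi B (\<lambda>k. ennreal ((\<lambda>_. 1::real) k)) i)"
    by (rule RE1(2)) (use B fin in auto)
  finally show ?thesis by simp
qed

lemma RE2:
  fixes \<psi> :: "'s \<Rightarrow> real"
  assumes B: "B \<noteq> {}" and nn: "\<And>k. 0 \<le> \<psi> k" and fin: "Phi B (Tr B (\<lambda>k. ennreal (\<psi> k))) i \<noteq> \<infinity>"
  shows "integrable (M i) (\<lambda>w. \<psi> (X (hit_time X B w) w))"
    "(\<integral>w. \<psi> (X (hit_time X B w) w) \<partial>M i) = enn2real (Phi B (Tr B (\<lambda>k. ennreal (\<psi> k))) i)"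
proof -
  have eq: "(\<integral>\<^sup>+w. ennreal (\<psi> (X (hit_time X B w) w)) \<partial>M i) = Phi B (Tr B (\<lambda>k. ennreal (\<psi> k))) i"
    using E2[OF hit_AE[OF B], of i "\<lambda>k. ennreal (\<psi> k)"] by simp
  show "integrable (M i) (\<lambda>w. \<psi> (X (hit_time X B w) w))"
    by (rule integrableI_nonneg) (use eq fin nn in \<open>auto simp: top.not_eq_extremum\<close>)
  show "(\<integral>w. \<psi> (X (hit_time X B w) w) \<partial>M i) = enn2real (Phi B (Tr B (\<lambda>k. ennreal (\<psi> k))) i)"
    by (subst integral_eq_nn_integral) (use eq nn in auto)
qed

end

lemma ennreal_max0_gen: "ennreal (max x 0) = ennreal x"
  by (cases "x \<ge> 0") (auto simp: max_def ennreal_neg)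

lemma e2r_ennreal: "enn2real (ennreal x) = max x 0"
  by (cases "x \<ge> 0") (auto simp: ennreal_neg max_def)

lemma max_split_identity:
  fixes x w :: real
  shows "ennreal (x - w) + ennreal (- x) + ennreal w = ennreal (w - x) + ennreal x + ennreal (- w)"
proof -
  have r: "max (x - w) 0 + max (- x) 0 + max w 0 = max (w - x) 0 + max x 0 + max (- w) 0"
    by (cases "x \<le> w"; cases "0 \<le> x"; cases "0 \<le> w") (simp_all add: max_def)
  have "ennreal (max (x - w) 0 + max (- x) 0 + max w 0) = ennreal (max (w - x) 0 + max x 0 + max (- w) 0)"
    using r by simp
  then show ?thesis by (simp add: ennreal_max0_gen)
qed

lemma KE_alg:
  fixes hp hm vp vm up um fp fm t'hp t'hm qvp qvm qup qum tahp tahm qhp qhm tjhp tjhm :: ennreal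
  assumes "hp = fp + t'hp" "hm = fm + t'hm" "vp = fp + qvp" "vm = fm + qvm" "up = tahp + qup" "um = tahm + qum"
    "tahp + qhp = tjhp + t'hp" "tahm + qhm = tjhm + t'hm" "tjhp = tjhm"
  shows "(hp + vm + um) + (qhm + qvp + qup) = (hm + vp + up) + (qhp + qvm + qum)"
proof -
  have "(hp + vm + um) + (qhm + qvp + qup) = (fp + fm + qvm + qum + qvp + qup + t'hp) + (tahm + qhm)"
    by (simp add: assms(1,4,6) ac_simps)
  also have "\<dots> = (fp + fm + qvm + qum + qvp + qup + t'hp) + (tjhm + t'hm)" by (simp add: assms(8))
  also have "\<dots> = (fp + fm + qvm + qum + qvp + qup + t'hm) + (tjhp + t'hp)" by (simp add: assms(9) ac_simps)
  also have "\<dots> = (fp + fm + qvm + qum + qvp + qup + t'hm) + (tahp + qhp)" by (simp add: assms(7))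
  also have "\<dots> = (hm + vp + up) + (qhp + qvm + qum)"
    by (simp add: assms(2,3,5) ac_simps)
  finally show ?thesis .
qed

locale MAIN = MCI P M X \<pi> for P :: "'s::countable \<Rightarrow> 's \<Rightarrow> real" and M :: "'s \<Rightarrow> 'w measure" and X \<pi> +
  fixes g :: "'s \<Rightarrow> real" and \<omega> :: real and h :: "'s \<Rightarrow> real" and j :: 's and A :: "'s set"
  assumes g_int: "(\<lambda>k. \<pi> k * \<bar>g k\<bar>) summable_on UNIV"
    and om: "\<omega> = (\<Sum>\<^sub>\<infinity>k. \<pi> k * g k)"
    and hd: "\<And>i. h i = y_val M X g {j} i - \<omega> * tau_val M X {j} i"
    and A_ne: "A \<noteq> {}"
begin

definition "gp k = ennreal (g k)"
definition "gm k = ennreal (- g k)"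
definition "ga k = ennreal \<bar>g k\<bar>"
definition "fp k = ennreal (g k - \<omega>)"
definition "fm k = ennreal (\<omega> - g k)"
definition "fa k = ennreal \<bar>g k - \<omega>\<bar>"

lemma pif_const: "pif (\<lambda>_. c) = c"
  using pif_cmult[of c "\<lambda>_. 1"] pif_1 by simp

lemma pif_ga: "pif ga \<noteq> \<infinity>"
proof -
  have "pif ga = (\<integral>\<^sup>+k. ennreal (\<pi> k * \<bar>g k\<bar>) \<partial>count_space UNIV)"
    unfolding pif_def ga_def by (simp add: ennreal_mult')
  also have "\<dots> = ennreal (\<Sum>\<^sub>\<infinity>k. \<pi> k * \<bar>g k\<bar>)"
    by (rule nn_sum_real) (use g_int in auto)
  finally show ?thesis by simp
qed

lemma pif_fa: "pif fa \<noteq> \<infinity>"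
proof -
  have "pif fa \<le> pif (\<lambda>k. ga k + ennreal \<bar>\<omega>\<bar>)"
    unfolding fa_def ga_def by (intro pif_mono) (simp add: ennreal_plus[symmetric] del: ennreal_plus)
  also have "\<dots> = pif ga + ennreal \<bar>\<omega>\<bar>" by (simp add: pif_add pif_const)
  finally show ?thesis using pif_ga by (auto simp: top_unique)
qed

lemma pif_gp: "pif gp \<noteq> \<infinity>" and pif_gm: "pif gm \<noteq> \<infinity>"
proof -
  have "pif gp \<le> pif ga" unfolding gp_def ga_def by (intro pif_mono) simp
  then show "pif gp \<noteq> \<infinity>" using pif_ga by (auto simp: top_unique)
  have "pif gm \<le> pif ga" unfolding gm_def ga_def by (intro pif_mono) simp
  then show "pif gm \<noteq> \<infinity>" using pif_ga by (auto simp: top_unique)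
qed

lemma om_split: "\<omega> = enn2real (pif gp) - enn2real (pif gm)"
proof -
  have "(\<lambda>x. norm (\<pi> x * g x)) summable_on UNIV"
    using g_int by (simp add: abs_mult)
  then have a: "Infinite_Set_Sum.abs_summable_on (\<lambda>k. \<pi> k * g k) UNIV"
    using abs_summable_equivalent by blast
  have "\<omega> = infsetsum (\<lambda>k. \<pi> k * g k) UNIV" using om infsetsum_infsum[OF a] by simp
  also have "\<dots> = integral\<^sup>L (count_space UNIV) (\<lambda>k. \<pi> k * g k)" unfolding infsetsum_def ..
  also have "\<dots> = enn2real (\<integral>\<^sup>+k. ennreal (\<pi> k * g k) \<partial>count_space UNIV) - enn2real (\<integral>\<^sup>+k. ennreal (- (\<pi> k * g k)) \<partial>count_space UNIV)"
    by (rule real_lebesgue_integral_def) (use a in \<open>simp add: abs_summable_on_def\<close>)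
  also have "(\<integral>\<^sup>+k. ennreal (\<pi> k * g k) \<partial>count_space UNIV) = pif gp"
    unfolding pif_def gp_def by (simp add: ennreal_mult')
  also have "(\<integral>\<^sup>+k. ennreal (- (\<pi> k * g k)) \<partial>count_space UNIV) = pif gm"
    unfolding pif_def gm_def by (simp add: ennreal_mult'[symmetric])
  finally show ?thesis .
qed

lemma pif_f_eq: "pif fp = pif fm"
proof -
  have pt: "(\<lambda>k. fp k + gm k + ennreal \<omega>) = (\<lambda>k. fm k + gp k + ennreal (- \<omega>))"
    by (rule ext) (simp add: fp_def fm_def gp_def gm_def max_split_identity del: ennreal_plus)
  have e1: "pif fp + pif gm + ennreal \<omega> = pif fm + pif gp + ennreal (- \<omega>)"
    using arg_cong[OF pt, of pif] by (simp add: pif_add pif_const)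
  have "enn2real (pif gp) + max (- \<omega>) 0 = enn2real (pif gm) + max \<omega> 0"
    using om_split by (simp add: max_def)
  then have "ennreal (enn2real (pif gp) + max (- \<omega>) 0) = ennreal (enn2real (pif gm) + max \<omega> 0)" by simp
  then have e2: "pif gp + ennreal (- \<omega>) = pif gm + ennreal \<omega>"
    using pif_gp pif_gm by (simp add: ennreal_max0_gen top.not_eq_extremum)
  have "pif fp + (pif gm + ennreal \<omega>) = pif fm + (pif gm + ennreal \<omega>)"
    using e1 e2 by (simp add: ac_simps)
  moreover have "pif gm + ennreal \<omega> \<noteq> \<infinity>" using pif_gm by simp
  ultimately show ?thesis by (simp add: add.commute[of _ "pif gm + ennreal \<omega>"] ennreal_add_left_cancel)
qed

abbreviation "Hp \<equiv> Phi {j} fp"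
abbreviation "Hm \<equiv> Phi {j} fm"
abbreviation "Ha \<equiv> Phi {j} fa"

lemma Hj: "Hp j = Hm j"
proof -
  have "ennreal (\<pi> j) * Hp j = ennreal (\<pi> j) * Hm j" using N5[of j fp] N5[of j fm] pif_f_eq by simp
  moreover have "ennreal (\<pi> j) \<noteq> 0" using pi_pos[of j] by simp
  ultimately show ?thesis by (simp add: ennreal_mult_cancel_left)
qed

lemma Ha_fin: "Ha k \<noteq> \<infinity>" using Phi_fin[OF pif_fa] .

lemma Hp_le: "Hp k \<le> Ha k" and Hm_le: "Hm k \<le> Ha k"
  by (intro Phi_mono, simp add: fp_def fa_def fm_def)+

lemma fin_le: "x \<le> y \<Longrightarrow> y \<noteq> (\<infinity>::ennreal) \<Longrightarrow> x \<noteq> \<infinity>"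
  by (auto simp: top_unique)

lemma Hp_fin: "Hp k \<noteq> \<infinity>" and Hm_fin: "Hm k \<noteq> \<infinity>"
  using fin_le[OF Hp_le Ha_fin] fin_le[OF Hm_le Ha_fin] by auto

lemma PhiA_fin: assumes "pif v \<noteq> \<infinity>" shows "Phi A v k \<noteq> \<infinity>"
proof -
  obtain a where a: "a \<in> A" using A_ne by auto
  have "Phi A v k \<le> Phi {a} v k" using a by (intro Phi_antimono_set) auto
  then show ?thesis using Phi_fin[OF assms, of a k] by (rule fin_le)
qed

lemma P_le1: "ennreal (P k l) \<le> 1"
  using nn_count_ge[of "\<lambda>l. ennreal (P k l)" l] sumP[of k] by simp

lemma UA_fin: "Phi A (Tr A Ha) k \<noteq> \<infinity>"
proof -
  define G where "G k = Ha k + Ha j * Phi A (\<lambda>_. 1) k" for k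
  have "Phi A (Tr A Ha) k \<le> G k"
  proof (rule Phi_min)
    fix k
    have tg: "Tr (-A) G k = Tr (-A) Ha k + Ha j * Tr (-A) (Phi A (\<lambda>_. 1)) k"
      unfolding G_def by (simp add: Tr_add Tr_cmult)
    have "Tr A Ha k + Tr (-A) G k = Tr UNIV Ha k + Ha j * Tr (-A) (Phi A (\<lambda>_. 1)) k"
      using tg Tr_split[of Ha k A] by (simp add: add.assoc)
    also have "Tr UNIV Ha k = Tr {j} Ha k + Tr (-{j}) Ha k" by (rule Tr_split)
    also have "Tr {j} Ha k \<le> Ha j" unfolding Tr_single using mult_right_mono[OF P_le1[of k j], of "Ha j"] by simp
    also have "Tr (-{j}) Ha k \<le> Ha k" using le_sum_r[of "Tr (-{j}) Ha k" "fa k"] Phi_fix[of "{j}" fa k] by simp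
    also have "Ha j + Ha k + Ha j * Tr (-A) (Phi A (\<lambda>_. 1)) k = Ha k + Ha j * (1 + Tr (-A) (Phi A (\<lambda>_. 1)) k)"
      by (simp add: distrib_left ac_simps)
    also have "1 + Tr (-A) (Phi A (\<lambda>_. 1)) k = Phi A (\<lambda>_. 1) k" using Phi_fix[of A "\<lambda>_. 1" k] by simp
    finally show "Tr A Ha k + Tr (-A) G k \<le> G k" unfolding G_def by (simp add: add_right_mono)
  qed
  moreover have "G k \<noteq> \<infinity>"
    using Ha_fin PhiA_fin[of "\<lambda>_. 1" k] pif_1 by (simp add: G_def ennreal_mult_eq_top_iff)
  ultimately show ?thesis by (rule fin_le)
qed

definition "s k = fa k + Tr A Ha k"
abbreviation "W \<equiv> Phi A s"

lemma W_split: "W k = Phi A fa k + Phi A (Tr A Ha) k"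
  unfolding s_def by (rule Phi_add)

lemma W_fin: "W k \<noteq> \<infinity>"
  using W_split PhiA_fin[OF pif_fa] UA_fin by simp

lemma Ha_le_W: "Ha k \<le> W k"
proof -
  have "Phin {j} fa n k \<le> W k" for n
  proof (induction n arbitrary: k)
    case (Suc n)
    have "Phin {j} fa (Suc n) k = fa k + Tr (-{j}) (Phin {j} fa n) k" by (rule Phin_Suc)
    also have "Tr (-{j}) (Phin {j} fa n) k \<le> Tr UNIV (Phin {j} fa n) k" by (rule Tr_mono_set) simp
    also have "Tr UNIV (Phin {j} fa n) k = Tr A (Phin {j} fa n) k + Tr (-A) (Phin {j} fa n) k" by (rule Tr_split)
    also have "Tr A (Phin {j} fa n) k \<le> Tr A Ha k"
      by (intro Tr_mono) (auto simp: Phi_def intro: SUP_upper)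
    also have "Tr (-A) (Phin {j} fa n) k \<le> Tr (-A) W k" by (intro Tr_mono Suc)
    also have "fa k + (Tr A Ha k + Tr (-A) W k) = W k"
      using Phi_fix[of A s k] by (simp add: s_def ac_simps)
    finally show ?case by (simp add: add_mono)
  qed simp
  then show ?thesis unfolding Phi_def by (auto intro: SUP_least)
qed

abbreviation "Vp \<equiv> Phi A fp"
abbreviation "Vm \<equiv> Phi A fm"
abbreviation "Up \<equiv> Phi A (Tr A Hp)"
abbreviation "Um \<equiv> Phi A (Tr A Hm)"
definition "Dp k = Hp k + Vm k + Um k"
definition "Dm k = Hm k + Vp k + Up k"

lemma D_le: "Dp k \<le> 2 * W k" "Dm k \<le> 2 * W k"
proof -
  have v: "Vm k \<le> Phi A fa k" "Vp k \<le> Phi A fa k"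
    by (intro Phi_mono, simp add: fp_def fa_def fm_def)+
  have u: "Um k \<le> Phi A (Tr A Ha) k" "Up k \<le> Phi A (Tr A Ha) k"
    by (intro Phi_mono Tr_mono Hp_le Hm_le)+
  have "Dp k \<le> Ha k + (Phi A fa k + Phi A (Tr A Ha) k)"
    unfolding Dp_def using Hm_le Hp_le v u by (simp add: add_mono add.assoc)
  also have "\<dots> \<le> W k + W k" using Ha_le_W W_split by (simp add: add_mono)
  finally show "Dp k \<le> 2 * W k" by (simp add: mult_2)
  have "Dm k \<le> Ha k + (Phi A fa k + Phi A (Tr A Ha) k)"
    unfolding Dm_def using Hm_le Hp_le v u by (simp add: add_mono add.assoc)
  also have "\<dots> \<le> W k + W k" using Ha_le_W W_split by (simp add: add_mono)
  finally show "Dm k \<le> 2 * W k" by (simp add: mult_2)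
qed

lemma QW_le: "Tr (-A) W k \<le> W k"
  using le_sum_r[of "Tr (-A) W k" "s k"] Phi_fix[of A s k] by simp

lemma QD_fin: "Tr (-A) Dp k \<noteq> \<infinity>" "Tr (-A) Dm k \<noteq> \<infinity>"
proof -
  have "Tr (-A) Dp k \<le> Tr (-A) (\<lambda>k. 2 * W k) k" by (intro Tr_mono D_le)
  also have "\<dots> \<le> 2 * W k" by (simp add: Tr_cmult QW_le mult_left_mono)
  finally show "Tr (-A) Dp k \<noteq> \<infinity>" using W_fin by (auto simp: top_unique ennreal_mult_eq_top_iff)
  have "Tr (-A) Dm k \<le> Tr (-A) (\<lambda>k. 2 * W k) k" by (intro Tr_mono D_le)
  also have "\<dots> \<le> 2 * W k" by (simp add: Tr_cmult QW_le mult_left_mono)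
  finally show "Tr (-A) Dm k \<noteq> \<infinity>" using W_fin by (auto simp: top_unique ennreal_mult_eq_top_iff)
qed

lemma KE: "Dp i + Tr (-A) Dm i = Dm i + Tr (-A) Dp i"
proof -
  have q1: "Tr (-A) Dm i = Tr (-A) Hm i + Tr (-A) Vp i + Tr (-A) Up i"
    unfolding Dm_def by (simp add: Tr_add)
  have q2: "Tr (-A) Dp i = Tr (-A) Hp i + Tr (-A) Vm i + Tr (-A) Um i"
    unfolding Dp_def by (simp add: Tr_add)
  show ?thesis unfolding q1 q2 Dp_def Dm_def
  proof (rule KE_alg)
    show "Hp i = fp i + Tr (-{j}) Hp i" by (rule Phi_fix)
    show "Hm i = fm i + Tr (-{j}) Hm i" by (rule Phi_fix)
    show "Vp i = fp i + Tr (-A) Vp i" by (rule Phi_fix)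
    show "Vm i = fm i + Tr (-A) Vm i" by (rule Phi_fix)
    show "Up i = Tr A Hp i + Tr (-A) Up i" by (rule Phi_fix)
    show "Um i = Tr A Hm i + Tr (-A) Um i" by (rule Phi_fix)
    show "Tr A Hp i + Tr (-A) Hp i = Tr {j} Hp i + Tr (-{j}) Hp i"
      using Tr_split[of Hp i A] Tr_split[of Hp i "{j}"] by simp
    show "Tr A Hm i + Tr (-A) Hm i = Tr {j} Hm i + Tr (-{j}) Hm i"
      using Tr_split[of Hm i A] Tr_split[of Hm i "{j}"] by simp
    show "Tr {j} Hp i = Tr {j} Hm i" by (simp add: Tr_single Hj)
  qed
qed

definition "Qn n = (Tr (-A) ^^ n)"

lemma Qn_Suc: "Qn (Suc n) u k = Tr (-A) (Qn n u) k"
  by (simp add: Qn_def)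

lemma Qn_mono: "(\<And>k. u k \<le> v k) \<Longrightarrow> Qn n u k \<le> Qn n v k"
proof (induction n arbitrary: k)
  case 0 then show ?case by (simp add: Qn_def)
next
  case (Suc n) then show ?case by (simp add: Qn_Suc Tr_mono)
qed

lemma Qn_cmult: "Qn n (\<lambda>k. c * u k) k = c * Qn n u k"
proof (induction n arbitrary: k)
  case 0 then show ?case by (simp add: Qn_def)
next
  case (Suc n)
  have "Qn n (\<lambda>k. c * u k) = (\<lambda>k. c * Qn n u k)" by (rule ext) (rule Suc)
  then show ?case by (simp add: Qn_Suc Tr_cmult)
qed

lemma IT: "Dp i + Qn n Dm i = Dm i + Qn n Dp i"
proof (induction n arbitrary: i)
  case 0 then show ?case by (simp add: Qn_def add.commute)
next
  case (Suc n)
  have f: "(\<lambda>i. Dp i + Qn n Dm i) = (\<lambda>i. Dm i + Qn n Dp i)" by (rule ext) (rule Suc)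
  have a: "Tr (-A) Dp i + Qn (Suc n) Dm i = Tr (-A) Dm i + Qn (Suc n) Dp i"
    using arg_cong[OF f, of "\<lambda>u. Tr (-A) u i"] by (simp add: Tr_add Qn_Suc)
  have "(Tr (-A) Dp i + Tr (-A) Dm i) + (Dp i + Qn (Suc n) Dm i) = (Dp i + Tr (-A) Dm i) + (Tr (-A) Dp i + Qn (Suc n) Dm i)"
    by (simp add: ac_simps)
  also have "\<dots> = (Dm i + Tr (-A) Dp i) + (Tr (-A) Dm i + Qn (Suc n) Dp i)"
    by (simp only: a KE[of i])
  also have "\<dots> = (Tr (-A) Dp i + Tr (-A) Dm i) + (Dm i + Qn (Suc n) Dp i)"
    by (simp add: ac_simps)
  finally have "(Tr (-A) Dp i + Tr (-A) Dm i) + (Dp i + Qn (Suc n) Dm i) = (Tr (-A) Dp i + Tr (-A) Dm i) + (Dm i + Qn (Suc n) Dp i)" .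
  moreover have "Tr (-A) Dp i + Tr (-A) Dm i \<noteq> \<infinity>" using QD_fin by simp
  ultimately show ?case by (simp add: ennreal_add_left_cancel)
qed

lemma W_decomp: "W i = Phin A s n i + Qn n W i"
proof (induction n arbitrary: i)
  case 0 then show ?case by (simp add: Qn_def)
next
  case (Suc n)
  have f: "(\<lambda>i. Phin A s n i + Qn n W i) = W" by (rule ext) (rule Suc[symmetric])
  have "Phin A s (Suc n) i + Qn (Suc n) W i = s i + (Tr (-A) (Phin A s n) i + Tr (-A) (Qn n W) i)"
    by (simp add: Phin_Suc Qn_Suc add.assoc)
  also have "\<dots> = s i + Tr (-A) W i" by (simp add: Tr_add[symmetric] f)
  also have "\<dots> = W i" by (rule Phi_fix[symmetric])
  finally show ?case ..
qed

lemma D_eq: "Dp i = Dm i"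
proof -
  have Dpf: "Dp i \<noteq> \<infinity>" and Dmf: "Dm i \<noteq> \<infinity>"
    using fin_le[OF D_le(1) ] fin_le[OF D_le(2)] W_fin by (auto simp: ennreal_mult_eq_top_iff)
  define e where "e n = enn2real (W i) - enn2real (Phin A s n i)" for n
  have bound: "\<bar>enn2real (Dp i) - enn2real (Dm i)\<bar> \<le> 2 * e n" for n
  proof -
    have Phf: "Phin A s n i \<noteq> \<infinity>" using W_fin[of i, unfolded W_decomp[of i n]] by auto
    have QWf: "Qn n W i \<noteq> \<infinity>" using W_fin[of i, unfolded W_decomp[of i n]] by auto
    have eQW: "enn2real (Qn n W i) = e n"
      unfolding e_def using W_decomp[of i n] Phf QWf by (simp add: enn2real_plus top.not_eq_extremum)
    have b1: "Qn n Dp i \<le> 2 * Qn n W i" "Qn n Dm i \<le> 2 * Qn n W i"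
      using Qn_mono[of Dp "\<lambda>k. 2 * W k" n i] Qn_mono[of Dm "\<lambda>k. 2 * W k" n i] D_le Qn_cmult by auto
    have fin2: "2 * Qn n W i \<noteq> \<infinity>" using QWf by (simp add: ennreal_mult_eq_top_iff)
    have r1a: "enn2real (Qn n Dp i) \<le> enn2real (2 * Qn n W i)"
      by (rule enn2real_mono[OF b1(1)]) (use fin2 in \<open>simp add: top.not_eq_extremum\<close>)
    have r1b: "enn2real (Qn n Dm i) \<le> enn2real (2 * Qn n W i)"
      by (rule enn2real_mono[OF b1(2)]) (use fin2 in \<open>simp add: top.not_eq_extremum\<close>)
    have r1: "enn2real (Qn n Dp i) \<le> 2 * e n" "enn2real (Qn n Dm i) \<le> 2 * e n"
      using r1a r1b by (simp_all add: enn2real_mult eQW)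
    have f1: "Qn n Dp i \<noteq> \<infinity>" "Qn n Dm i \<noteq> \<infinity>" using b1 fin2 by (auto simp: top_unique)
    have "enn2real (Dp i + Qn n Dm i) = enn2real (Dm i + Qn n Dp i)" using IT[of i n] by simp
    then have "enn2real (Dp i) + enn2real (Qn n Dm i) = enn2real (Dm i) + enn2real (Qn n Dp i)"
      using Dpf Dmf f1 by (simp add: enn2real_plus top.not_eq_extremum)
    then show ?thesis using r1 enn2real_nonneg[of "Qn n Dp i"] enn2real_nonneg[of "Qn n Dm i"] by linarith
  qed
  have lim: "(\<lambda>n. Phin A s n i) \<longlonglongrightarrow> W i"
    unfolding Phi_def by (rule LIMSEQ_SUP) (rule Phin_incseq)
  have lim': "(\<lambda>n. Phin A s n i) \<longlonglongrightarrow> ennreal (enn2real (W i))"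
    using lim W_fin[of i] by (simp add: top.not_eq_extremum)
  have "(\<lambda>n. enn2real (Phin A s n i)) \<longlonglongrightarrow> enn2real (W i)"
    by (rule tendsto_enn2real[OF lim']) simp
  then have "(\<lambda>n. enn2real (W i) - enn2real (Phin A s n i)) \<longlonglongrightarrow> enn2real (W i) - enn2real (W i)"
    by (rule tendsto_diff[OF tendsto_const])
  then have "(\<lambda>n. 2 * e n) \<longlonglongrightarrow> 2 * (enn2real (W i) - enn2real (W i))"
    unfolding e_def by (rule tendsto_mult[OF tendsto_const])
  then have "\<bar>enn2real (Dp i) - enn2real (Dm i)\<bar> \<le> 0"
    using bound by (intro LIMSEQ_le_const[where X="\<lambda>n. 2 * e n"]) auto
  then have e: "enn2real (Dp i) = enn2real (Dm i)" by simp
  have "Dp i = ennreal (enn2real (Dp i))" using Dpf by (simp add: top.not_eq_extremum)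
  also have "\<dots> = ennreal (enn2real (Dm i))" using e by simp
  also have "\<dots> = Dm i" using Dmf by (simp add: top.not_eq_extremum)
  finally show ?thesis .
qed

end

context MAIN begin

lemma pt_identity: "(\<lambda>k. fp k + gm k + ennreal \<omega>) = (\<lambda>k. fm k + gp k + ennreal (- \<omega>))"
  by (rule ext) (simp add: fp_def fm_def gp_def gm_def max_split_identity del: ennreal_plus)

lemma decomp:
  assumes B: "B \<noteq> {}" and f1: "Phi B ga k \<noteq> \<infinity>" and f2: "Phi B (\<lambda>_. 1) k \<noteq> \<infinity>"
  shows "y_val M X g B k - \<omega> * tau_val M X B k = enn2real (Phi B fp k) - enn2real (Phi B fm k)"
proof -
  have y: "y_val M X g B k = enn2real (Phi B gp k) - enn2real (Phi B gm k)"
    using RE1s[OF B, of g k] f1 unfolding ga_def gp_def gm_def by simp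
  have t: "tau_val M X B k = enn2real (Phi B (\<lambda>_. 1) k)" by (rule RE_tau[OF B f2])
  have gab: "Phi B (\<lambda>k. ga k + ennreal \<bar>\<omega>\<bar>) k \<noteq> \<infinity>"
    using f1 f2 by (simp add: Phi_add Phi_const[of B "ennreal \<bar>\<omega>\<bar>"] ennreal_mult_eq_top_iff)
  have fpf: "Phi B fp k \<noteq> \<infinity>"
    by (rule fin_le[OF Phi_mono gab]) (simp add: fp_def ga_def ennreal_plus[symmetric] del: ennreal_plus)
  have fmf: "Phi B fm k \<noteq> \<infinity>"
    by (rule fin_le[OF Phi_mono gab]) (simp add: fm_def ga_def ennreal_plus[symmetric] del: ennreal_plus)
  have gpf: "Phi B gp k \<noteq> \<infinity>" by (rule fin_le[OF Phi_mono f1]) (simp add: gp_def ga_def)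
  have gmf: "Phi B gm k \<noteq> \<infinity>" by (rule fin_le[OF Phi_mono f1]) (simp add: gm_def ga_def)
  have "Phi B (\<lambda>k. fp k + gm k + ennreal \<omega>) k = Phi B (\<lambda>k. fm k + gp k + ennreal (- \<omega>)) k"
    by (simp only: pt_identity)
  then have e: "Phi B fp k + Phi B gm k + ennreal \<omega> * Phi B (\<lambda>_. 1) k = Phi B fm k + Phi B gp k + ennreal (- \<omega>) * Phi B (\<lambda>_. 1) k"
    by (simp add: Phi_add Phi_const[of B "ennreal _"])
  have "enn2real (Phi B fp k + Phi B gm k + ennreal \<omega> * Phi B (\<lambda>_. 1) k) = enn2real (Phi B fm k + Phi B gp k + ennreal (- \<omega>) * Phi B (\<lambda>_. 1) k)"
    using e by simp
  then have r: "enn2real (Phi B fp k) + enn2real (Phi B gm k) + max \<omega> 0 * enn2real (Phi B (\<lambda>_. 1) k) = enn2real (Phi B fm k) + enn2real (Phi B gp k) + max (- \<omega>) 0 * enn2real (Phi B (\<lambda>_. 1) k)"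
    using fpf fmf gpf gmf f2
    by (simp add: enn2real_plus enn2real_mult e2r_ennreal top.not_eq_extremum ennreal_mult_less_top)
  have "\<omega> * enn2real (Phi B (\<lambda>_. 1) k) = max \<omega> 0 * enn2real (Phi B (\<lambda>_. 1) k) - max (- \<omega>) 0 * enn2real (Phi B (\<lambda>_. 1) k)"
    by (cases "\<omega> \<ge> 0") (auto simp: max_def)
  moreover have "\<omega> * tau_val M X B k = \<omega> * enn2real (Phi B (\<lambda>_. 1) k)" using t by simp
  ultimately show ?thesis using y r by linarith
qed

lemma ga_fin: "pif ga \<noteq> \<infinity>" by (rule pif_ga)

lemma h_eq: "h k = enn2real (Hp k) - enn2real (Hm k)"
  unfolding hd by (rule decomp) (use Phi_fin[OF pif_ga] Phi_fin[of "\<lambda>_. 1"] pif_1 in auto)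

lemma Hp_ennreal: "(\<lambda>k. ennreal (enn2real (Hp k))) = Hp" and Hm_ennreal: "(\<lambda>k. ennreal (enn2real (Hm k))) = Hm"
  using Hp_fin Hm_fin by (auto simp: top.not_eq_extremum)

lemma UpUm_fin: "Up i \<noteq> \<infinity>" "Um i \<noteq> \<infinity>"
  by (rule fin_le[OF Phi_mono UA_fin], rule Tr_mono, rule Hp_le)
     (rule fin_le[OF Phi_mono UA_fin], rule Tr_mono, rule Hm_le)

lemma u_eq: "(\<integral>w. h (X (hit_time X A w) w) \<partial>M i) = enn2real (Up i) - enn2real (Um i)"
proof -
  have ip: "integrable (M i) (\<lambda>w. enn2real (Hp (X (hit_time X A w) w)))"
    "(\<integral>w. enn2real (Hp (X (hit_time X A w) w)) \<partial>M i) = enn2real (Up i)"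
    using RE2[OF A_ne, of "\<lambda>k. enn2real (Hp k)" i] UpUm_fin by (simp_all add: Hp_ennreal)
  have im: "integrable (M i) (\<lambda>w. enn2real (Hm (X (hit_time X A w) w)))"
    "(\<integral>w. enn2real (Hm (X (hit_time X A w) w)) \<partial>M i) = enn2real (Um i)"
    using RE2[OF A_ne, of "\<lambda>k. enn2real (Hm k)" i] UpUm_fin by (simp_all add: Hm_ennreal)
  have "(\<integral>w. h (X (hit_time X A w) w) \<partial>M i) = (\<integral>w. enn2real (Hp (X (hit_time X A w) w)) - enn2real (Hm (X (hit_time X A w) w)) \<partial>M i)"
    by (simp add: h_eq)
  also have "\<dots> = enn2real (Up i) - enn2real (Um i)"
    using ip im by simp
  finally show ?thesis .
qed

lemma main: "h i = y_val M X g A i - \<omega> * tau_val M X A i + (\<integral>w. h (X (hit_time X A w) w) \<partial>M i)"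
proof -
  have v: "y_val M X g A i - \<omega> * tau_val M X A i = enn2real (Vp i) - enn2real (Vm i)"
    by (rule decomp[OF A_ne]) (use PhiA_fin[OF pif_ga] PhiA_fin[of "\<lambda>_. 1"] pif_1 in auto)
  have Vf: "Vp i \<noteq> \<infinity>" "Vm i \<noteq> \<infinity>"
    by (rule fin_le[OF Phi_mono PhiA_fin[OF pif_fa]], simp add: fp_def fa_def)
       (rule fin_le[OF Phi_mono PhiA_fin[OF pif_fa]], simp add: fm_def fa_def)
  have "enn2real (Dp i) = enn2real (Dm i)" using D_eq by simp
  then have "enn2real (Hp i) + enn2real (Vm i) + enn2real (Um i) = enn2real (Hm i) + enn2real (Vp i) + enn2real (Up i)"
    unfolding Dp_def Dm_def using Vf UpUm_fin Hp_fin Hm_fin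
    by (simp add: enn2real_plus top.not_eq_extremum)
  then show ?thesis using v u_eq[of i] h_eq[of i] by linarith
qed

end

theorem lemma2p4:
  fixes P :: "'s::countable \<Rightarrow> 's \<Rightarrow> real"
    and M :: "'s \<Rightarrow> 'w measure" and X :: "nat \<Rightarrow> 'w \<Rightarrow> 's"
    and \<pi> g :: "'s \<Rightarrow> real" and \<omega> :: real
    and h :: "'s \<Rightarrow> real" and j :: 's and A :: "'s set"
  assumes mc: "markov_chain P M X"
    and irr: "irreducible_mc M X"
    and pr: "positive_recurrent_mc M X"
    and inv: "invariant_distribution P \<pi>"
    and g_int: "(\<lambda>k. \<pi> k * \<bar>g k\<bar>) summable_on UNIV"
    and \<omega>_def: "\<omega> = (\<Sum>\<^sub>\<infinity>k. \<pi> k * g k)"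
    and h_def: "\<And>i. h i = y_val M X g {j} i - \<omega> * tau_val M X {j} i"
    and A_ne: "A \<noteq> {}"
  shows "\<forall>i. h i = y_val M X g A i - \<omega> * tau_val M X A i
                 + (\<integral>w. h (X (hit_time X A w) w) \<partial>M i)"
proof -
  interpret MAIN P M X \<pi> g \<omega> h j A
    by (unfold_locales) (use assms in auto)
  show ?thesis using main by blast
qed


end
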